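(* Let $A$ and $B$ be groups admitting regular left-orders. Then the free product $A*B$ admits a one-counter left-order.
   Context: A left-order on a group $G$ is a total order invariant under left multiplication, with positive cone $\{g:1\prec g\}$. It is regular (resp. one-counter) if $G$ is finitely generated and there exist a finite set $X$, a surjective monoid homomorphism $\pi\colon X^*\to G$ and a language $\mathcal{L}\subseteq X^*$ accepted by a finite state automaton (resp. by a nondeterministic pushdown automaton with a single stack symbol) with $\pi(\mathcal{L})$ equal to the positive cone. *)

theory Defs
  imports "HOL-Algebra.Group"
begin

definition left_order :: "('g, 'm) monoid_scheme \<Rightarrow> ('g \<times> 'g) set \<Rightarrow> bool" where
  "left_order G R \<longleftrightarrow>
     R \<subseteq> carrier G \<times> carrier G \<and>
     (\<forall>x\<in>carrier G. (x, x) \<notin> R) \<and>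
     (\<forall>x\<in>carrier G. \<forall>y\<in>carrier G. \<forall>z\<in>carrier G. (x, y) \<in> R \<longrightarrow> (y, z) \<in> R \<longrightarrow> (x, z) \<in> R) \<and>
     (\<forall>x\<in>carrier G. \<forall>y\<in>carrier G. x \<noteq> y \<longrightarrow> (x, y) \<in> R \<or> (y, x) \<in> R) \<and>
     (\<forall>g\<in>carrier G. \<forall>x\<in>carrier G. \<forall>y\<in>carrier G. (x, y) \<in> R \<longrightarrow> (g \<otimes>\<^bsub>G\<^esub> x, g \<otimes>\<^bsub>G\<^esub> y) \<in> R)"

definition positive_cone :: "('g, 'm) monoid_scheme \<Rightarrow> ('g \<times> 'g) set \<Rightarrow> 'g set" where
  "positive_cone G R = {g \<in> carrier G. (\<one>\<^bsub>G\<^esub>, g) \<in> R}"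

text \<open>Finite alphabets are encoded as finite sets of natural numbers. A monoid homomorphism
  from the free monoid X* to G is determined by the images f x of the letters.\<close>
definition eval_word :: "('g, 'm) monoid_scheme \<Rightarrow> (nat \<Rightarrow> 'g) \<Rightarrow> nat list \<Rightarrow> 'g" where
  "eval_word G f w = foldr (\<lambda>x g. f x \<otimes>\<^bsub>G\<^esub> g) w \<one>\<^bsub>G\<^esub>"

section \<open>Finite state automata (deterministic; equivalent to nondeterministic)\<close>

definition dfa_lang :: "nat set \<Rightarrow> nat set \<Rightarrow> nat \<Rightarrow> nat set \<Rightarrow> (nat \<Rightarrow> nat \<Rightarrow> nat) \<Rightarrow> nat list set" where
  "dfa_lang X Q q0 F d = {w \<in> lists X. fold (\<lambda>x q. d q x) w q0 \<in> F}"

definition regular_lang :: "nat set \<Rightarrow> nat list set \<Rightarrow> bool" where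
  "regular_lang X L \<longleftrightarrow>
     (\<exists>Q q0 F d. finite Q \<and> q0 \<in> Q \<and> F \<subseteq> Q \<and> (\<forall>q\<in>Q. \<forall>x\<in>X. d q x \<in> Q) \<and>
        L = dfa_lang X Q q0 F d)"

text \<open>A nondeterministic pushdown automaton with a single stack symbol (above a bottom marker),
  i.e. a one-counter automaton. The stack content is a counter c. A transition
  (p, a, z, q, n) reads the letter a (or nothing if a = None), is enabled in state p iff
  (c = 0) = z (i.e. the top of stack is the bottom marker iff z), goes to state q, pops the
  top symbol (unless it is the bottom marker) and pushes n copies of the stack symbol.\<close>
type_synonym oca_trans = "nat \<times> nat option \<times> bool \<times> nat \<times> nat"

inductive oca_run :: "oca_trans set \<Rightarrow> nat \<Rightarrow> nat list \<Rightarrow> nat \<Rightarrow> nat \<Rightarrow> nat \<Rightarrow> bool"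
  for T :: "oca_trans set" where
  oca_refl: "oca_run T p [] c p c"
| oca_step: "(p, a, c = 0, q, n) \<in> T \<Longrightarrow>
     oca_run T q w (if c = 0 then n else c - 1 + n) r e \<Longrightarrow>
     oca_run T p (case a of None \<Rightarrow> w | Some x \<Rightarrow> x # w) c r e"

definition oca_lang :: "nat \<Rightarrow> nat set \<Rightarrow> oca_trans set \<Rightarrow> nat list set" where
  "oca_lang q0 F T = {w. \<exists>q e. oca_run T q0 w 0 q e \<and> q \<in> F}"

definition one_counter_lang :: "nat set \<Rightarrow> nat list set \<Rightarrow> bool" where
  "one_counter_lang X L \<longleftrightarrow>
     (\<exists>Q q0 F T. finite Q \<and> q0 \<in> Q \<and> F \<subseteq> Q \<and> finite T \<and>
        (\<forall>(p, a, z, q, n)\<in>T. p \<in> Q \<and> q \<in> Q \<and> set_option a \<subseteq> X) \<and>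
        L = oca_lang q0 F T)"

definition regular_left_order :: "('g, 'm) monoid_scheme \<Rightarrow> ('g \<times> 'g) set \<Rightarrow> bool" where
  "regular_left_order G R \<longleftrightarrow> left_order G R \<and>
     (\<exists>X f L. finite X \<and> f ` X \<subseteq> carrier G \<and> eval_word G f ` lists X = carrier G \<and>
        L \<subseteq> lists X \<and> regular_lang X L \<and> eval_word G f ` L = positive_cone G R)"

definition one_counter_left_order :: "('g, 'm) monoid_scheme \<Rightarrow> ('g \<times> 'g) set \<Rightarrow> bool" where
  "one_counter_left_order G R \<longleftrightarrow> left_order G R \<and>
     (\<exists>X f L. finite X \<and> f ` X \<subseteq> carrier G \<and> eval_word G f ` lists X = carrier G \<and>
        L \<subseteq> lists X \<and> one_counter_lang X L \<and> eval_word G f ` L = positive_cone G R)"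

fun fp_reduced :: "('a, 'm) monoid_scheme \<Rightarrow> ('b, 'n) monoid_scheme \<Rightarrow> ('a + 'b) list \<Rightarrow> bool" where
  "fp_reduced A B [] = True"
| "fp_reduced A B (Inl a # w) \<longleftrightarrow> a \<in> carrier A \<and> a \<noteq> \<one>\<^bsub>A\<^esub> \<and> fp_reduced A B w \<and>
      (case w of Inl _ # _ \<Rightarrow> False | _ \<Rightarrow> True)"
| "fp_reduced A B (Inr b # w) \<longleftrightarrow> b \<in> carrier B \<and> b \<noteq> \<one>\<^bsub>B\<^esub> \<and> fp_reduced A B w \<and>
      (case w of Inr _ # _ \<Rightarrow> False | _ \<Rightarrow> True)"

fun fp_cons :: "('a, 'm) monoid_scheme \<Rightarrow> ('b, 'n) monoid_scheme \<Rightarrow> 'a + 'b \<Rightarrow> ('a + 'b) list \<Rightarrow> ('a + 'b) list" where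
  "fp_cons A B (Inl a) (Inl a' # w) =
     (if a \<otimes>\<^bsub>A\<^esub> a' = \<one>\<^bsub>A\<^esub> then w else Inl (a \<otimes>\<^bsub>A\<^esub> a') # w)"
| "fp_cons A B (Inr b) (Inr b' # w) =
     (if b \<otimes>\<^bsub>B\<^esub> b' = \<one>\<^bsub>B\<^esub> then w else Inr (b \<otimes>\<^bsub>B\<^esub> b') # w)"
| "fp_cons A B (Inl a) w = (if a = \<one>\<^bsub>A\<^esub> then w else Inl a # w)"
| "fp_cons A B (Inr b) w = (if b = \<one>\<^bsub>B\<^esub> then w else Inr b # w)"

definition free_product :: "('a, 'm) monoid_scheme \<Rightarrow> ('b, 'n) monoid_scheme \<Rightarrow> ('a + 'b) list monoid" where
  "free_product A B =
     \<lparr>carrier = {w. fp_reduced A B w},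
      mult = (\<lambda>x y. foldr (fp_cons A B) x y),
      one = []\<rparr>"

end

theory Submission
  imports Defs "HOL-Library.Countable"
begin


definition okl :: "('a, 'm) monoid_scheme \<Rightarrow> ('b, 'n) monoid_scheme \<Rightarrow> 'a + 'b \<Rightarrow> bool" where
  "okl A B x = (case x of Inl a \<Rightarrow> a \<in> carrier A | Inr b \<Rightarrow> b \<in> carrier B)"
definition ntl :: "('a, 'm) monoid_scheme \<Rightarrow> ('b, 'n) monoid_scheme \<Rightarrow> 'a + 'b \<Rightarrow> bool" where
  "ntl A B x = (case x of Inl a \<Rightarrow> a \<noteq> \<one>\<^bsub>A\<^esub> | Inr b \<Rightarrow> b \<noteq> \<one>\<^bsub>B\<^esub>)"
definition linv :: "('a, 'm) monoid_scheme \<Rightarrow> ('b, 'n) monoid_scheme \<Rightarrow> 'a + 'b \<Rightarrow> 'a + 'b" where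
  "linv A B x = (case x of Inl a \<Rightarrow> Inl (inv\<^bsub>A\<^esub> a) | Inr b \<Rightarrow> Inr (inv\<^bsub>B\<^esub> b))"
definition fp_inv :: "('a, 'm) monoid_scheme \<Rightarrow> ('b, 'n) monoid_scheme \<Rightarrow> ('a + 'b) list \<Rightarrow> ('a + 'b) list" where
  "fp_inv A B w = rev (map (linv A B) w)"

lemma red_Cons: "fp_reduced A B (x # w) \<longleftrightarrow>
   okl A B x \<and> ntl A B x \<and> fp_reduced A B w \<and> (w \<noteq> [] \<longrightarrow> isl (hd w) \<noteq> isl x)"
  by (cases x; cases w; auto simp: okl_def ntl_def split: sum.splits list.splits)

lemma red_append: "fp_reduced A B (u @ v) \<longleftrightarrow>
   fp_reduced A B u \<and> fp_reduced A B v \<and> (u \<noteq> [] \<longrightarrow> v \<noteq> [] \<longrightarrow> isl (last u) \<noteq> isl (hd v))"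
  by (induction u) (auto simp: red_Cons)

locale fp2 =
  fixes A :: "('a, 'm) monoid_scheme" and B :: "('b, 'n) monoid_scheme"
  assumes grA: "group A" and grB: "group B"
begin

interpretation GA: group A by (rule grA)
interpretation GB: group B by (rule grB)

abbreviation "red \<equiv> fp_reduced A B"
abbreviation "fc \<equiv> fp_cons A B"
abbreviation "mu x y \<equiv> foldr (fp_cons A B) x y"

lemma fc_red: "okl A B x \<Longrightarrow> red w \<Longrightarrow> red (fc x w)"
  by (cases x; cases w rule: list.exhaust; auto simp: okl_def red_Cons ntl_def split: sum.splits)

lemma mu_red: "red x \<Longrightarrow> red y \<Longrightarrow> red (mu x y)"
  by (induction x) (auto simp: red_Cons fc_red)

lemma fc_one_l: "red w \<Longrightarrow> fc (Inl \<one>\<^bsub>A\<^esub>) w = w"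
  by (cases w rule: list.exhaust; auto simp: red_Cons okl_def ntl_def split: sum.splits)
lemma fc_one_r: "red w \<Longrightarrow> fc (Inr \<one>\<^bsub>B\<^esub>) w = w"
  by (cases w rule: list.exhaust; auto simp: red_Cons okl_def ntl_def split: sum.splits)

lemma fc_l_diff: "w = [] \<or> \<not> isl (hd w) \<Longrightarrow> fc (Inl a) w = (if a = \<one>\<^bsub>A\<^esub> then w else Inl a # w)"
  by (cases w; cases "hd w"; auto)
lemma fc_r_diff: "w = [] \<or> isl (hd w) \<Longrightarrow> fc (Inr a) w = (if a = \<one>\<^bsub>B\<^esub> then w else Inr a # w)"
  apply (cases w) apply simp apply (rename_tac y ys) apply (case_tac y) by auto

lemma fc_fc_l: assumes "a \<in> carrier A" "a' \<in> carrier A" "red w"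
  shows "fc (Inl a) (fc (Inl a') w) = fc (Inl (a \<otimes>\<^bsub>A\<^esub> a')) w"
proof (cases w)
  case Nil then show ?thesis using assms by auto
next
  case (Cons y w')
  show ?thesis
  proof (cases y)
    case (Inl b)
    have b: "b \<in> carrier A" using assms Cons Inl by (auto simp: red_Cons okl_def)
    have w': "red w'" "w' \<noteq> [] \<longrightarrow> \<not> isl (hd w')" using assms Cons Inl by (auto simp: red_Cons)
    have "fc (Inl a) w' = (if a = \<one>\<^bsub>A\<^esub> then w' else Inl a # w')"
      using w' by (intro fc_l_diff) auto
    moreover have "a \<otimes>\<^bsub>A\<^esub> a' \<otimes>\<^bsub>A\<^esub> b = a \<otimes>\<^bsub>A\<^esub> (a' \<otimes>\<^bsub>A\<^esub> b)"
      using assms b by (simp add: GA.m_assoc)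
    ultimately show ?thesis using Cons Inl assms b by auto
  next
    case (Inr b)
    then show ?thesis using Cons assms by auto
  qed
qed

lemma fc_fc_r: assumes "a \<in> carrier B" "a' \<in> carrier B" "red w"
  shows "fc (Inr a) (fc (Inr a') w) = fc (Inr (a \<otimes>\<^bsub>B\<^esub> a')) w"
proof (cases w)
  case Nil then show ?thesis using assms by auto
next
  case (Cons y w')
  show ?thesis
  proof (cases y)
    case (Inr b)
    have b: "b \<in> carrier B" using assms Cons Inr by (auto simp: red_Cons okl_def)
    have w': "red w'" "w' \<noteq> [] \<longrightarrow> isl (hd w')" using assms Cons Inr by (auto simp: red_Cons)
    have "fc (Inr a) w' = (if a = \<one>\<^bsub>B\<^esub> then w' else Inr a # w')"
      using w' by (intro fc_r_diff) auto
    moreover have "a \<otimes>\<^bsub>B\<^esub> a' \<otimes>\<^bsub>B\<^esub> b = a \<otimes>\<^bsub>B\<^esub> (a' \<otimes>\<^bsub>B\<^esub> b)"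
      using assms b by (simp add: GB.m_assoc)
    ultimately show ?thesis using Cons Inr assms b by auto
  next
    case (Inl b)
    then show ?thesis using Cons assms by auto
  qed
qed

lemma mu_fc: assumes "okl A B x" "red w" "red z"
  shows "mu (fc x w) z = fc x (mu w z)"
proof -
  have mz: "red (mu w z)" using assms mu_red by auto
  show ?thesis
  proof (cases x)
    case (Inl a)
    show ?thesis
    proof (cases "w \<noteq> [] \<and> isl (hd w)")
      case True
      then obtain b w' where w: "w = Inl b # w'" by (cases w; cases "hd w"; auto)
      have b: "b \<in> carrier A" and w': "red w'" using assms w by (auto simp: red_Cons okl_def)
      have a: "a \<in> carrier A" using assms Inl by (auto simp: okl_def)
      have mw: "red (mu w' z)" using w' assms mu_red by auto
      have "fc x (mu w z) = fc (Inl a) (fc (Inl b) (mu w' z))" using w Inl by simp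
      also have "\<dots> = fc (Inl (a \<otimes>\<^bsub>A\<^esub> b)) (mu w' z)" using fc_fc_l a b mw by simp
      finally show ?thesis using w Inl fc_one_l[OF mw] by auto
    next
      case False
      then show ?thesis using Inl fc_l_diff[of w a] fc_one_l[OF mz] by auto
    qed
  next
    case (Inr a)
    show ?thesis
    proof (cases "w \<noteq> [] \<and> \<not> isl (hd w)")
      case True
      then obtain b w' where w: "w = Inr b # w'" by (cases w; cases "hd w"; auto)
      have b: "b \<in> carrier B" and w': "red w'" using assms w by (auto simp: red_Cons okl_def)
      have a: "a \<in> carrier B" using assms Inr by (auto simp: okl_def)
      have mw: "red (mu w' z)" using w' assms mu_red by auto
      have "fc x (mu w z) = fc (Inr a) (fc (Inr b) (mu w' z))" using w Inr by simp
      also have "\<dots> = fc (Inr (a \<otimes>\<^bsub>B\<^esub> b)) (mu w' z)" using fc_fc_r a b mw by simp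
      finally show ?thesis using w Inr fc_one_r[OF mw] by auto
    next
      case False
      then show ?thesis using Inr fc_r_diff[of w a] fc_one_r[OF mz] by auto
    qed
  qed
qed

lemma mu_assoc: "red x \<Longrightarrow> red y \<Longrightarrow> red z \<Longrightarrow> mu (mu x y) z = mu x (mu y z)"
proof (induction x)
  case Nil then show ?case by simp
next
  case (Cons a x)
  then have "okl A B a" "red x" by (auto simp: red_Cons)
  then show ?case using Cons mu_fc[of a "mu x y" z] mu_red by auto
qed

lemma linv_ok: "okl A B x \<Longrightarrow> okl A B (linv A B x)"
  by (cases x) (auto simp: okl_def linv_def)

lemma fc_linv: "okl A B x \<Longrightarrow> fc (linv A B x) (x # w) = w"
  by (cases x) (auto simp: okl_def linv_def)

lemma fp_inv_Cons: "fp_inv A B (x # w) = fp_inv A B w @ [linv A B x]"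
  by (simp add: fp_inv_def)

lemma red_fp_inv: "red w \<Longrightarrow> red (fp_inv A B w)"
proof (induction w)
  case Nil then show ?case by (simp add: fp_inv_def)
next
  case (Cons x w)
  have hx: "okl A B x" "ntl A B x" "red w" "w \<noteq> [] \<longrightarrow> isl (hd w) \<noteq> isl x"
    using Cons.prems by (auto simp: red_Cons)
  have lx: "red [linv A B x]" using hx
    by (cases x) (auto simp: red_Cons okl_def ntl_def linv_def)
  have "w \<noteq> [] \<Longrightarrow> last (fp_inv A B w) = linv A B (hd w)"
    by (cases w) (auto simp: fp_inv_def)
  moreover have "\<And>y. isl (linv A B y) = isl y" by (case_tac y) (auto simp: linv_def)
  moreover have "fp_inv A B w = [] \<longleftrightarrow> w = []" by (simp add: fp_inv_def)
  ultimately show ?case using Cons hx lx by (auto simp: fp_inv_Cons red_append)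
qed

lemma mu_fp_inv: "red w \<Longrightarrow> mu (fp_inv A B w) w = []"
proof (induction w)
  case Nil then show ?case by (simp add: fp_inv_def)
next
  case (Cons x w)
  then have "okl A B x" "red w" by (auto simp: red_Cons)
  then show ?case using Cons by (simp add: fp_inv_Cons fc_linv)
qed

lemma FP_group: "group (free_product A B)"
  apply (rule groupI)
      apply (auto simp: free_product_def mu_red mu_assoc)
  by (metis mu_fp_inv red_fp_inv)

lemma FP_inv: "red w \<Longrightarrow> inv\<^bsub>free_product A B\<^esub> w = fp_inv A B w"
proof -
  assume w: "red w"
  interpret G: group "free_product A B" by (rule FP_group)
  show ?thesis using w red_fp_inv[OF w] mu_fp_inv[OF w]
    by (intro G.inv_equality) (auto simp: free_product_def)
qed

end


definition cone :: "('g, 'm) monoid_scheme \<Rightarrow> 'g set \<Rightarrow> bool" where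
  "cone G P \<longleftrightarrow> P \<subseteq> carrier G \<and> \<one>\<^bsub>G\<^esub> \<notin> P \<and> (\<forall>a\<in>P. \<forall>b\<in>P. a \<otimes>\<^bsub>G\<^esub> b \<in> P) \<and>
     (\<forall>a\<in>carrier G. a \<noteq> \<one>\<^bsub>G\<^esub> \<longrightarrow> (a \<in> P \<longleftrightarrow> inv\<^bsub>G\<^esub> a \<notin> P))"

lemma left_order_cone: assumes "group G" "left_order G R" shows "cone G (positive_cone G R)"
proof -
  interpret G: group G by fact
  have R: "R \<subseteq> carrier G \<times> carrier G" "\<And>x. x\<in>carrier G \<Longrightarrow> (x, x) \<notin> R"
    "\<And>x y z. x\<in>carrier G \<Longrightarrow> y\<in>carrier G \<Longrightarrow> z\<in>carrier G \<Longrightarrow> (x, y) \<in> R \<Longrightarrow> (y, z) \<in> R \<Longrightarrow> (x, z) \<in> R"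
    "\<And>x y. x\<in>carrier G \<Longrightarrow> y\<in>carrier G \<Longrightarrow> x \<noteq> y \<Longrightarrow> (x, y) \<in> R \<or> (y, x) \<in> R"
    "\<And>g x y. g\<in>carrier G \<Longrightarrow> x\<in>carrier G \<Longrightarrow> y\<in>carrier G \<Longrightarrow> (x, y) \<in> R \<Longrightarrow> (g \<otimes>\<^bsub>G\<^esub> x, g \<otimes>\<^bsub>G\<^esub> y) \<in> R"
    using assms(2) unfolding left_order_def by blast+
  let ?P = "positive_cone G R"
  have 1: "?P \<subseteq> carrier G" "\<one>\<^bsub>G\<^esub> \<notin> ?P" using R(2) by (auto simp: positive_cone_def)
  have 2: "a \<otimes>\<^bsub>G\<^esub> b \<in> ?P" if "a \<in> ?P" "b \<in> ?P" for a b
  proof -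
    have a: "a \<in> carrier G" "(\<one>\<^bsub>G\<^esub>, a) \<in> R" and b: "b \<in> carrier G" "(\<one>\<^bsub>G\<^esub>, b) \<in> R"
      using that by (auto simp: positive_cone_def)
    have "(a \<otimes>\<^bsub>G\<^esub> \<one>\<^bsub>G\<^esub>, a \<otimes>\<^bsub>G\<^esub> b) \<in> R" using R(5)[OF a(1) _ b(1) b(2)] by simp
    then have "(a, a \<otimes>\<^bsub>G\<^esub> b) \<in> R" using a by simp
    then show ?thesis using R(3)[OF _ a(1) _ a(2)] a b by (auto simp: positive_cone_def)
  qed
  have 3: "a \<in> ?P \<longleftrightarrow> inv\<^bsub>G\<^esub> a \<notin> ?P" if "a \<in> carrier G" "a \<noteq> \<one>\<^bsub>G\<^esub>" for a
  proof
    assume "a \<in> ?P"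
    then have ra: "(\<one>\<^bsub>G\<^esub>, a) \<in> R" by (auto simp: positive_cone_def)
    have "(inv\<^bsub>G\<^esub> a \<otimes>\<^bsub>G\<^esub> \<one>\<^bsub>G\<^esub>, inv\<^bsub>G\<^esub> a \<otimes>\<^bsub>G\<^esub> a) \<in> R" by (rule R(5)) (use ra that in auto)
    then have ia: "(inv\<^bsub>G\<^esub> a, \<one>\<^bsub>G\<^esub>) \<in> R" using that by simp
    show "inv\<^bsub>G\<^esub> a \<notin> ?P"
    proof
      assume "inv\<^bsub>G\<^esub> a \<in> ?P"
      then have "(\<one>\<^bsub>G\<^esub>, inv\<^bsub>G\<^esub> a) \<in> R" by (auto simp: positive_cone_def)
      then have "(\<one>\<^bsub>G\<^esub>, \<one>\<^bsub>G\<^esub>) \<in> R" using R(3)[OF _ _ _ _ ia] that by auto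
      then show False using R(2) by auto
    qed
  next
    assume n: "inv\<^bsub>G\<^esub> a \<notin> ?P"
    show "a \<in> ?P"
    proof (rule ccontr)
      assume "a \<notin> ?P"
      then have ar: "(a, \<one>\<^bsub>G\<^esub>) \<in> R" using R(4)[of a "\<one>\<^bsub>G\<^esub>"] that by (auto simp: positive_cone_def)
      have "(inv\<^bsub>G\<^esub> a \<otimes>\<^bsub>G\<^esub> a, inv\<^bsub>G\<^esub> a \<otimes>\<^bsub>G\<^esub> \<one>\<^bsub>G\<^esub>) \<in> R" using R(5)[OF _ _ _ ar] that by (meson G.inv_closed G.one_closed)
      then have "(\<one>\<^bsub>G\<^esub>, inv\<^bsub>G\<^esub> a) \<in> R" using that by simp
      then show False using n that by (auto simp: positive_cone_def)
    qed
  qed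
  show ?thesis unfolding cone_def using 1 2 3 by blast
qed

lemma cone_facts: assumes "cone G P"
  shows "P \<subseteq> carrier G" "\<one>\<^bsub>G\<^esub> \<notin> P" "\<And>a b. a \<in> P \<Longrightarrow> b \<in> P \<Longrightarrow> a \<otimes>\<^bsub>G\<^esub> b \<in> P"
    "\<And>a. a \<in> carrier G \<Longrightarrow> a \<noteq> \<one>\<^bsub>G\<^esub> \<Longrightarrow> a \<in> P \<Longrightarrow> inv\<^bsub>G\<^esub> a \<notin> P"
    "\<And>a. a \<in> carrier G \<Longrightarrow> a \<noteq> \<one>\<^bsub>G\<^esub> \<Longrightarrow> a \<notin> P \<Longrightarrow> inv\<^bsub>G\<^esub> a \<in> P"
  using assms unfolding cone_def by blast+


definition jn :: "'a + 'b \<Rightarrow> 'a + 'b \<Rightarrow> int" where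
  "jn x y = (if isl x \<and> \<not> isl y then 1 else if \<not> isl x \<and> isl y then -1 else 0)"

definition sg :: "'a set \<Rightarrow> 'b set \<Rightarrow> 'a + 'b \<Rightarrow> int" where
  "sg PA PB x = (case x of Inl a \<Rightarrow> if a \<in> PA then 1 else -1 | Inr b \<Rightarrow> if b \<in> PB then 1 else -1)"

fun phi :: "'a set \<Rightarrow> 'b set \<Rightarrow> ('a + 'b) list \<Rightarrow> int" where
  "phi PA PB [] = 0"
| "phi PA PB [x] = sg PA PB x"
| "phi PA PB (x # y # w) = sg PA PB x + jn x y + phi PA PB (y # w)"

definition JJ :: "('a + 'b) list \<Rightarrow> ('a + 'b) list \<Rightarrow> int" where
  "JJ u v = (if u = [] \<or> v = [] then 0 else jn (last u) (hd v))"

lemma phi_append: "phi PA PB (u @ v) = phi PA PB u + JJ u v + phi PA PB v"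
proof (induction u)
  case Nil then show ?case by (simp add: JJ_def)
next
  case (Cons x u)
  show ?case
  proof (cases u)
    case Nil then show ?thesis by (cases v) (auto simp: JJ_def)
  next
    case (Cons y u')
    then show ?thesis using Cons.IH by (cases v) (auto simp: JJ_def)
  qed
qed

lemma jn_bounds: "jn x y \<le> 1" "jn x y \<ge> -1" by (auto simp: jn_def)
lemma JJ_bounds: "JJ u v \<le> 1" "JJ u v \<ge> -1" by (auto simp: JJ_def jn_def)
lemma jn_swap: "jn x y = - jn y x" by (auto simp: jn_def)

definition lm :: "('a, 'm) monoid_scheme \<Rightarrow> ('b, 'n) monoid_scheme \<Rightarrow> 'a + 'b \<Rightarrow> 'a + 'b \<Rightarrow> 'a + 'b" where
  "lm A B x y = (case x of Inl a \<Rightarrow> Inl (a \<otimes>\<^bsub>A\<^esub> projl y) | Inr b \<Rightarrow> Inr (b \<otimes>\<^bsub>B\<^esub> projr y))"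

context fp2 begin

interpretation GA: group A by (rule grA)
interpretation GB: group B by (rule grB)

lemma invA_eq: "a \<in> carrier A \<Longrightarrow> b \<in> carrier A \<Longrightarrow> a \<otimes>\<^bsub>A\<^esub> b = \<one>\<^bsub>A\<^esub> \<longleftrightarrow> b = inv\<^bsub>A\<^esub> a"
  by (metis GA.inv_comm GA.inv_equality GA.r_inv)
lemma invB_eq: "a \<in> carrier B \<Longrightarrow> b \<in> carrier B \<Longrightarrow> a \<otimes>\<^bsub>B\<^esub> b = \<one>\<^bsub>B\<^esub> \<longleftrightarrow> b = inv\<^bsub>B\<^esub> a"
  by (metis GB.inv_comm GB.inv_equality GB.r_inv)

lemma fc_diff: "ntl A B x \<Longrightarrow> (w = [] \<or> isl (hd w) \<noteq> isl x) \<Longrightarrow> fc x w = x # w"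
  by (cases x) (auto simp: ntl_def fc_l_diff fc_r_diff)

lemma mu_concat: "red (u @ w) \<Longrightarrow> mu u w = u @ w"
proof (induction u)
  case Nil then show ?case by simp
next
  case (Cons x u)
  then have "red (u @ w)" "ntl A B x" "u @ w = [] \<or> isl (hd (u @ w)) \<noteq> isl x"
    by (auto simp: red_Cons)
  then show ?case using Cons.IH fc_diff by auto
qed

lemma isl_linv[simp]: "isl (linv A B y) = isl y" by (cases y) (auto simp: linv_def)

lemma decomp: "red g \<Longrightarrow> red h \<Longrightarrow>
  (\<exists>u k v. g = u @ k \<and> h = fp_inv A B k @ v \<and> mu g h = u @ v \<and> (u = [] \<or> v = [] \<or> isl (last u) \<noteq> isl (hd v)))
  \<or> (\<exists>u k v s t. g = u @ s # k \<and> h = fp_inv A B k @ t # v \<and> isl s = isl t \<and>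
       mu g h = u @ lm A B s t # v \<and> ntl A B (lm A B s t) \<and> okl A B s \<and> okl A B t)"
proof (induction g arbitrary: h rule: rev_induct)
  case Nil
  then show ?case by (intro disjI1 exI[of _ "[]"] exI[of _ "[]"] exI[of _ h]) (auto simp: fp_inv_def)
next
  case (snoc x g')
  have g': "red g'" "okl A B x" "ntl A B x" "g' \<noteq> [] \<longrightarrow> isl (last g') \<noteq> isl x"
    using snoc.prems by (auto simp: red_append red_Cons)
  have mg: "mu (g' @ [x]) h = mu g' (fc x h)" by simp
  show ?case
  proof (cases "h \<noteq> [] \<and> isl (hd h) = isl x")
    case True
    then obtain y h' where h: "h = y # h'" "isl y = isl x" by (cases h) auto
    have y: "okl A B y" "ntl A B y" "red h'" using snoc.prems h by (auto simp: red_Cons)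
    show ?thesis
    proof (cases "ntl A B (lm A B x y)")
      case False
      then have fcx: "fc x h = h'" using h g' y
        by (cases x; cases y; auto simp: lm_def ntl_def okl_def)
      have yx: "y = linv A B x" using False h g' y
        by (cases x; cases y; auto simp: lm_def ntl_def okl_def linv_def invA_eq invB_eq)
      have finv: "fp_inv A B (k @ [x]) = y # fp_inv A B k" for k using yx by (simp add: fp_inv_def)
      from snoc.IH[OF g'(1) y(3)] show ?thesis
      proof
        assume "\<exists>u k v. g' = u @ k \<and> h' = fp_inv A B k @ v \<and> mu g' h' = u @ v \<and> (u = [] \<or> v = [] \<or> isl (last u) \<noteq> isl (hd v))"
        then obtain u k v where "g' = u @ k" "h' = fp_inv A B k @ v" "mu g' h' = u @ v" "(u = [] \<or> v = [] \<or> isl (last u) \<noteq> isl (hd v))" by blast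
        then show ?thesis using mg fcx h finv by (intro disjI1 exI[of _ u] exI[of _ "k @ [x]"] exI[of _ v]) auto
      next
        assume "\<exists>u k v s t. g' = u @ s # k \<and> h' = fp_inv A B k @ t # v \<and> isl s = isl t \<and>
           mu g' h' = u @ lm A B s t # v \<and> ntl A B (lm A B s t) \<and> okl A B s \<and> okl A B t"
        then obtain u k v s t where "g' = u @ s # k" "h' = fp_inv A B k @ t # v" "isl s = isl t"
           "mu g' h' = u @ lm A B s t # v" "ntl A B (lm A B s t)" "okl A B s" "okl A B t" by blast
        then show ?thesis using mg fcx h finv
          by (intro disjI2 exI[of _ u] exI[of _ "k @ [x]"] exI[of _ v] exI[of _ s] exI[of _ t]) auto
      qed
    next
      case True
      then have fcx: "fc x h = lm A B x y # h'" using h g' y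
        by (cases x; cases y; auto simp: lm_def ntl_def okl_def)
      have ok: "okl A B (lm A B x y)" using g' y h
        by (cases x; cases y; auto simp: lm_def okl_def)
      have il: "isl (lm A B x y) = isl x" by (cases x) (auto simp: lm_def)
      have "red (lm A B x y # h')" using True ok y h il snoc.prems
        by (auto simp: red_Cons)
      then have "red (g' @ lm A B x y # h')" using g' il by (auto simp: red_append)
      then have "mu (g' @ [x]) h = g' @ lm A B x y # h'" using mg fcx mu_concat by simp
      then show ?thesis using h g' y True
        by (intro disjI2 exI[of _ g'] exI[of _ "[]"] exI[of _ h'] exI[of _ x] exI[of _ y])
           (auto simp: fp_inv_def)
    qed
  next
    case False
    then have fcx: "fc x h = x # h" using g' fc_diff by auto
    have "red (x # h)" using g' snoc.prems False by (auto simp: red_Cons)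
    then have "red (g' @ [x] @ h)" using g' by (simp add: red_append)
    then have "mu (g' @ [x]) h = (g' @ [x]) @ h" using mg fcx mu_concat by simp
    then show ?thesis using False
      by (intro disjI1 exI[of _ "g' @ [x]"] exI[of _ "[]"] exI[of _ h]) (auto simp: fp_inv_def)
  qed
qed

end


lemma isl_linv_g[simp]: "isl (linv A B y) = isl y" by (cases y) (auto simp: linv_def)
lemma fp_inv_Nil_iff[simp]: "fp_inv A B w = [] \<longleftrightarrow> w = []" by (simp add: fp_inv_def)
lemma jn_linv[simp]: "jn (linv A B x) (linv A B y) = jn x y" by (simp add: jn_def)

locale fp2c = fp2 A B for A :: "('a, 'm) monoid_scheme" and B :: "('b, 'n) monoid_scheme" +
  fixes PA :: "'a set" and PB :: "'b set"
  assumes cA: "cone A PA" and cB: "cone B PB"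
begin

interpretation GA: group A by (rule grA)
interpretation GB: group B by (rule grB)

abbreviation "ph \<equiv> phi PA PB"
abbreviation "sgn' \<equiv> sg PA PB"

lemma sg_linv: "sgn' (linv A B x) = - sgn' x" if "okl A B x" "ntl A B x"
proof (cases x)
  case (Inl a)
  then show ?thesis using cone_facts(4,5)[OF cA, of a] that by (auto simp: sg_def linv_def okl_def ntl_def)
next
  case (Inr a)
  then show ?thesis using cone_facts(4,5)[OF cB, of a] that by (auto simp: sg_def linv_def okl_def ntl_def)
qed

lemma phi_Cons: "ph (x # w) = sgn' x + JJ [x] w + ph w"
  using phi_append[of PA PB "[x]" w] by simp

lemma last_fp_inv: "w \<noteq> [] \<Longrightarrow> last (fp_inv A B w) = linv A B (hd w)"
  by (cases w) (auto simp: fp_inv_def)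

lemma phi_inv: "red w \<Longrightarrow> ph (fp_inv A B w) = - ph w"
proof (induction w)
  case Nil then show ?case by (simp add: fp_inv_def)
next
  case (Cons x w)
  then have x: "okl A B x" "ntl A B x" "red w" by (auto simp: red_Cons)
  have "ph (fp_inv A B (x # w)) = ph (fp_inv A B w) + JJ (fp_inv A B w) [linv A B x] + sgn' (linv A B x)"
    by (simp add: fp_inv_Cons phi_append)
  also have "JJ (fp_inv A B w) [linv A B x] = - JJ [x] w"
    by (cases "w = []") (auto simp: JJ_def last_fp_inv jn_swap[of x])
  finally show ?case using Cons.IH x sg_linv phi_Cons[of x w] by simp
qed

lemma sg_odd: "odd (sgn' x)" by (cases x) (auto simp: sg_def)

lemma phi_odd: "red w \<Longrightarrow> w \<noteq> [] \<Longrightarrow> odd (ph w)"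
proof (induction w)
  case Nil then show ?case by simp
next
  case (Cons x w)
  show ?case
  proof (cases w)
    case Nil then show ?thesis by (simp add: sg_odd)
  next
    case (Cons y w')
    then have "isl x \<noteq> isl y" "red w" using Cons.prems by (auto simp: red_Cons)
    then have "odd (jn x y)" by (auto simp: jn_def)
    then show ?thesis using Cons Cons.IH \<open>red w\<close> sg_odd[of x] by auto
  qed
qed

end



context fp2c begin

interpretation GA: group A by (rule grA)
interpretation GB: group B by (rule grB)


lemma lm_sg: assumes "okl A B s" "okl A B t" "isl s = isl t" "ntl A B (lm A B s t)" "ntl A B s" "ntl A B t"
  shows "sgn' (lm A B s t) - sgn' s - sgn' t \<ge> -1"
proof (cases s)
  case (Inl a)
  then obtain b where t: "t = Inl b" using assms(3) by (cases t) auto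
  have ab: "a \<in> carrier A" "b \<in> carrier A" "a \<noteq> \<one>\<^bsub>A\<^esub>" "b \<noteq> \<one>\<^bsub>A\<^esub>" "a \<otimes>\<^bsub>A\<^esub> b \<noteq> \<one>\<^bsub>A\<^esub>"
    using assms Inl t by (auto simp: okl_def ntl_def lm_def)
  note c = cone_facts(3)[OF cA] cone_facts(5)[OF cA] cone_facts(4)[OF cA]
  have "a \<otimes>\<^bsub>A\<^esub> b \<in> PA" if "a \<in> PA" "b \<in> PA" using c that by blast
  moreover have "a \<otimes>\<^bsub>A\<^esub> b \<notin> PA" if "a \<notin> PA" "b \<notin> PA"
  proof -
    have "inv\<^bsub>A\<^esub> a \<in> PA" "inv\<^bsub>A\<^esub> b \<in> PA" using c(2) ab that by blast+
    then have "inv\<^bsub>A\<^esub> b \<otimes>\<^bsub>A\<^esub> inv\<^bsub>A\<^esub> a \<in> PA" using c by blast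
    then have "inv\<^bsub>A\<^esub> (a \<otimes>\<^bsub>A\<^esub> b) \<in> PA" using ab by (simp add: GA.inv_mult_group)
    then show ?thesis using c(3)[of "a \<otimes>\<^bsub>A\<^esub> b"] ab GA.m_closed GB.m_closed by auto
  qed
  ultimately show ?thesis using Inl t by (auto simp: sg_def lm_def)
next
  case (Inr a)
  then obtain b where t: "t = Inr b" using assms(3) by (cases t) auto
  have ab: "a \<in> carrier B" "b \<in> carrier B" "a \<noteq> \<one>\<^bsub>B\<^esub>" "b \<noteq> \<one>\<^bsub>B\<^esub>" "a \<otimes>\<^bsub>B\<^esub> b \<noteq> \<one>\<^bsub>B\<^esub>"
    using assms Inr t by (auto simp: okl_def ntl_def lm_def)
  note c = cone_facts(3)[OF cB] cone_facts(5)[OF cB] cone_facts(4)[OF cB]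
  have "a \<otimes>\<^bsub>B\<^esub> b \<in> PB" if "a \<in> PB" "b \<in> PB" using c that by blast
  moreover have "a \<otimes>\<^bsub>B\<^esub> b \<notin> PB" if "a \<notin> PB" "b \<notin> PB"
  proof -
    have "inv\<^bsub>B\<^esub> a \<in> PB" "inv\<^bsub>B\<^esub> b \<in> PB" using c(2) ab that by blast+
    then have "inv\<^bsub>B\<^esub> b \<otimes>\<^bsub>B\<^esub> inv\<^bsub>B\<^esub> a \<in> PB" using c by blast
    then have "inv\<^bsub>B\<^esub> (a \<otimes>\<^bsub>B\<^esub> b) \<in> PB" using ab by (simp add: GB.inv_mult_group)
    then show ?thesis using c(3)[of "a \<otimes>\<^bsub>B\<^esub> b"] ab GA.m_closed GB.m_closed by auto
  qed
  ultimately show ?thesis using Inr t by (auto simp: sg_def lm_def)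
qed

end



context fp2c begin

interpretation GA: group A by (rule grA)
interpretation GB: group B by (rule grB)


lemma JJ_Cons_r: "JJ u (s # k) = JJ u [s]" by (simp add: JJ_def)

lemma isl_lm: "isl (lm A B s t) = isl s" by (cases s) (auto simp: lm_def)

lemma main_ineq: assumes g: "red g" and h: "red h"
  shows "ph (mu g h) \<ge> ph g + ph h - 1"
  using decomp[OF g h]
proof
  assume "\<exists>u k v. g = u @ k \<and> h = fp_inv A B k @ v \<and> mu g h = u @ v \<and> (u = [] \<or> v = [] \<or> isl (last u) \<noteq> isl (hd v))"
  then obtain u k v where d: "g = u @ k" "h = fp_inv A B k @ v" "mu g h = u @ v"
    "u = [] \<or> v = [] \<or> isl (last u) \<noteq> isl (hd v)" by blast
  have rk: "red k" "red u" "u \<noteq> [] \<longrightarrow> k \<noteq> [] \<longrightarrow> isl (last u) \<noteq> isl (hd k)"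
    using g d by (auto simp: red_append)
  have rv: "fp_inv A B k \<noteq> [] \<longrightarrow> v \<noteq> [] \<longrightarrow> isl (last (fp_inv A B k)) \<noteq> isl (hd v)"
    using h d by (auto simp: red_append)
  have e1: "ph g = ph u + JJ u k + ph k" using d by (simp add: phi_append)
  have e2: "ph h = - ph k + JJ (fp_inv A B k) v + ph v" using d phi_inv[OF rk(1)] by (simp add: phi_append)
  have e3: "ph (mu g h) = ph u + JJ u v + ph v" using d by (simp add: phi_append)
  have "JJ u v + 1 \<ge> JJ u k + JJ (fp_inv A B k) v"
  proof (cases "k = []")
    case True then show ?thesis using JJ_bounds[of u v] by (simp add: JJ_def fp_inv_def)
  next
    case False
    have fk: "fp_inv A B k \<noteq> []" using False by (simp add: fp_inv_def)
    show ?thesis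
    proof (cases "u = [] \<or> v = []")
      case True then show ?thesis using JJ_bounds[of u k] JJ_bounds[of "fp_inv A B k" v]
        by (auto simp: JJ_def)
    next
      case False
      then show ?thesis using d(4) rk(3) rv fk \<open>k \<noteq> []\<close> last_fp_inv[of k] by auto
    qed
  qed
  then show ?thesis using e1 e2 e3 by simp
next
  assume "\<exists>u k v s t. g = u @ s # k \<and> h = fp_inv A B k @ t # v \<and> isl s = isl t \<and>
       mu g h = u @ lm A B s t # v \<and> ntl A B (lm A B s t) \<and> okl A B s \<and> okl A B t"
  then obtain u k v s t where d: "g = u @ s # k" "h = fp_inv A B k @ t # v" "isl s = isl t"
       "mu g h = u @ lm A B s t # v" "ntl A B (lm A B s t)" "okl A B s" "okl A B t" by blast
  have rk: "red k" "ntl A B s" "k \<noteq> [] \<longrightarrow> isl (hd k) \<noteq> isl s"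
    using g d by (auto simp: red_append red_Cons)
  have rt: "ntl A B t" using h d by (auto simp: red_append red_Cons)
  have rv: "fp_inv A B k \<noteq> [] \<longrightarrow> isl (last (fp_inv A B k)) \<noteq> isl t"
    using h d by (auto simp: red_append)
  have e1: "ph g = ph u + JJ u [s] + sgn' s + JJ [s] k + ph k" using d
    by (simp add: phi_append phi_Cons JJ_Cons_r[of _ _ k] JJ_Cons_r[of _ _ v])
  have e2: "ph h = - ph k + JJ (fp_inv A B k) [t] + sgn' t + JJ [t] v + ph v"
    using d phi_inv[OF rk(1)] by (simp add: phi_append phi_Cons JJ_Cons_r[of _ _ k] JJ_Cons_r[of _ _ v])
  have e3: "ph (mu g h) = ph u + JJ u [lm A B s t] + sgn' (lm A B s t) + JJ [lm A B s t] v + ph v"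
    using d by (simp add: phi_append phi_Cons JJ_Cons_r[of _ _ k] JJ_Cons_r[of _ _ v])
  have j1: "JJ u [lm A B s t] = JJ u [s]" by (simp add: JJ_def jn_def isl_lm)
  have j2: "JJ [lm A B s t] v = JJ [t] v" using d(3) by (simp add: JJ_def jn_def isl_lm)
  have j3: "JJ [s] k + JJ (fp_inv A B k) [t] = 0"
  proof (cases "k = []")
    case True then show ?thesis by (simp add: JJ_def fp_inv_def)
  next
    case False
    then show ?thesis using d(3) last_fp_inv[of k] by (auto simp: JJ_def jn_def fp_inv_def)
  qed
  show ?thesis using e1 e2 e3 j1 j2 j3 lm_sg[OF d(6) d(7) d(3) d(5) rk(2) rt] by simp
qed

end


context fp2c begin

definition Rfp :: "(('a + 'b) list \<times> ('a + 'b) list) set" where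
  "Rfp = {(x, y). red x \<and> red y \<and> ph (mu (fp_inv A B x) y) > 0}"

lemma FP_simps: "carrier (free_product A B) = {w. red w}"
  "x \<otimes>\<^bsub>free_product A B\<^esub> y = mu x y" "\<one>\<^bsub>free_product A B\<^esub> = []"
  by (auto simp: free_product_def)

lemma Rfp_left_order: "left_order (free_product A B) Rfp"
proof -
  interpret G: group "free_product A B" by (rule FP_group)
  let ?G = "free_product A B"
  have R_alt: "(x, y) \<in> Rfp \<longleftrightarrow> x \<in> carrier ?G \<and> y \<in> carrier ?G \<and> ph (inv\<^bsub>?G\<^esub> x \<otimes>\<^bsub>?G\<^esub> y) > 0" for x y
    by (auto simp: Rfp_def FP_simps FP_inv)
  have irr: "(x, x) \<notin> Rfp" if "x \<in> carrier ?G" for x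
    using that by (simp add: R_alt FP_simps(3))
  have trans: "(x, z) \<in> Rfp" if "x \<in> carrier ?G" "y \<in> carrier ?G" "z \<in> carrier ?G" "(x, y) \<in> Rfp" "(y, z) \<in> Rfp" for x y z
  proof -
    have e: "inv\<^bsub>?G\<^esub> x \<otimes>\<^bsub>?G\<^esub> z = (inv\<^bsub>?G\<^esub> x \<otimes>\<^bsub>?G\<^esub> y) \<otimes>\<^bsub>?G\<^esub> (inv\<^bsub>?G\<^esub> y \<otimes>\<^bsub>?G\<^esub> z)"
      using that by (simp add: G.m_assoc[symmetric]) (simp add: G.m_assoc G.r_inv)
    have c: "inv\<^bsub>?G\<^esub> x \<otimes>\<^bsub>?G\<^esub> y \<in> carrier ?G" "inv\<^bsub>?G\<^esub> y \<otimes>\<^bsub>?G\<^esub> z \<in> carrier ?G" using that by auto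
    have "ph (inv\<^bsub>?G\<^esub> x \<otimes>\<^bsub>?G\<^esub> z) \<ge> ph (inv\<^bsub>?G\<^esub> x \<otimes>\<^bsub>?G\<^esub> y) + ph (inv\<^bsub>?G\<^esub> y \<otimes>\<^bsub>?G\<^esub> z) - 1"
      unfolding e using main_ineq c by (simp add: FP_simps)
    then show ?thesis using that by (simp add: R_alt)
  qed
  have tot: "(x, y) \<in> Rfp \<or> (y, x) \<in> Rfp" if "x \<in> carrier ?G" "y \<in> carrier ?G" "x \<noteq> y" for x y
  proof -
    let ?w = "inv\<^bsub>?G\<^esub> x \<otimes>\<^bsub>?G\<^esub> y"
    have wc: "?w \<in> carrier ?G" using that by auto
    have "?w \<noteq> []" using that G.inv_comm G.r_inv
      by (metis FP_simps(3) G.inv_closed G.inv_equality G.inv_inv)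
    then have o: "odd (ph ?w)" using phi_odd wc by (auto simp: FP_simps)
    have iw: "inv\<^bsub>?G\<^esub> ?w = inv\<^bsub>?G\<^esub> y \<otimes>\<^bsub>?G\<^esub> x" using that by (simp add: G.inv_mult_group)
    have "ph (inv\<^bsub>?G\<^esub> ?w) = - ph ?w" using wc by (simp add: FP_inv FP_simps phi_inv)
    then have e: "ph (inv\<^bsub>?G\<^esub> y \<otimes>\<^bsub>?G\<^esub> x) = - ph ?w" using iw by simp
    have "ph ?w \<noteq> 0" using o by auto
    then have "ph ?w > 0 \<or> ph (inv\<^bsub>?G\<^esub> y \<otimes>\<^bsub>?G\<^esub> x) > 0" using e by linarith
    then show ?thesis using that by (auto simp: R_alt)
  qed
  have inv: "(g \<otimes>\<^bsub>?G\<^esub> x, g \<otimes>\<^bsub>?G\<^esub> y) \<in> Rfp" if "g \<in> carrier ?G" "x \<in> carrier ?G" "y \<in> carrier ?G" "(x, y) \<in> Rfp" for g x y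
  proof -
    have "inv\<^bsub>?G\<^esub> (g \<otimes>\<^bsub>?G\<^esub> x) \<otimes>\<^bsub>?G\<^esub> (g \<otimes>\<^bsub>?G\<^esub> y) = inv\<^bsub>?G\<^esub> x \<otimes>\<^bsub>?G\<^esub> y"
      using that by (simp add: G.inv_mult_group G.m_assoc[symmetric]) (simp add: G.m_assoc G.l_inv)
    then show ?thesis using that by (simp add: R_alt)
  qed
  have sub: "Rfp \<subseteq> carrier ?G \<times> carrier ?G" by (auto simp: R_alt)
  show ?thesis unfolding left_order_def
    apply (intro conjI)
    subgoal by (rule sub)
    subgoal using irr by blast
    subgoal using trans by blast
    subgoal using tot by blast
    subgoal using inv by blast
    done
qed

lemma Rfp_cone: "positive_cone (free_product A B) Rfp = {g. red g \<and> ph g > 0}"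
  unfolding positive_cone_def Rfp_def FP_simps by (simp add: fp_inv_def)

end


datatype ost = Start | EndS bool bool | Mid bool bool bool | Rd bool bool nat bool | Acc
instance ost :: countable by countable_datatype

definition val :: "bool \<Rightarrow> nat \<Rightarrow> int" where "val b c = (if b then int c else - int c)"
definition newc :: "nat \<Rightarrow> nat \<Rightarrow> nat" where "newc c n = (if c = 0 then n else c - 1 + n)"
definition sgnb :: "bool \<Rightarrow> int" where "sgnb e = (if e then 1 else -1)"

definition opset :: "bool \<Rightarrow> (bool \<times> bool \<times> bool \<times> nat) set" where
  "opset d = (if d then {(True, True, True, 1), (True, False, True, 2), (False, False, False, 0), (False, True, True, 1)}
              else {(False, True, False, 1), (False, False, False, 2), (True, False, True, 0), (True, True, False, 1)})"
definition keep :: "(bool \<times> nat) set" where "keep = {(True, 0), (False, 1)}"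

lemma op_sound: "(b, c = 0, b', n) \<in> opset d \<Longrightarrow> val b' (newc c n) = val b c + sgnb d"
  by (cases d; cases b; cases "c = 0") (auto simp: opset_def val_def newc_def sgnb_def)

lemma op_complete: "\<exists>b' n. (b, c = 0, b', n) \<in> opset d \<and> val b' (newc c n) = val b c + sgnb d"
  by (cases d; cases b; cases "c = 0") (auto simp: opset_def val_def newc_def sgnb_def)

lemma keep_sound: "(c = 0, n) \<in> keep \<Longrightarrow> newc c n = c"
  by (auto simp: keep_def newc_def)
lemma keep_complete: "\<exists>n. (c = 0, n) \<in> keep \<and> newc c n = c"
  by (cases "c = 0") (auto simp: keep_def newc_def)

lemma finite_opset: "finite (opset d)" by (simp add: opset_def)
lemma finite_keep: "finite keep" by (simp add: keep_def)

definition lcode :: "bool \<Rightarrow> bool \<Rightarrow> nat \<Rightarrow> nat" where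
  "lcode Y e x = 4 * x + (if Y then 0 else 2) + (if e then 0 else 1)"

fun jt :: "bool option \<Rightarrow> bool \<Rightarrow> int" where
  "jt None Y = 0"
| "jt (Some X) Y = (if X \<and> \<not> Y then 1 else if \<not> X \<and> Y then -1 else 0)"

inductive run :: "(ost \<times> nat option \<times> bool \<times> ost \<times> nat) set \<Rightarrow> ost \<Rightarrow> nat list \<Rightarrow> nat \<Rightarrow> ost \<Rightarrow> nat \<Rightarrow> bool"
  for T where
  run_refl: "run T p [] c p c"
| run_step: "(p, a, c = 0, q, n) \<in> T \<Longrightarrow> run T q w (newc c n) r e \<Longrightarrow>
     run T p (case a of None \<Rightarrow> w | Some x \<Rightarrow> x # w) c r e"

lemma run_trans: "run T p w c q e \<Longrightarrow> run T q w' e r e' \<Longrightarrow> run T p (w @ w') c r e'"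
proof (induction rule: run.induct)
  case (run_refl p c) then show ?case by simp
next
  case (run_step p1 a c1 q1 n w q2 e2)
  have "run T p1 (case a of None \<Rightarrow> w @ w' | Some x \<Rightarrow> x # (w @ w')) c1 r e'"
    using run_step by (intro run.run_step) auto
  then show ?case by (cases a) auto
qed

definition encT :: "(ost \<times> nat option \<times> bool \<times> ost \<times> nat) set \<Rightarrow> oca_trans set" where
  "encT T = (\<lambda>(p, a, z, q, n). (to_nat p, a, z, to_nat q, n)) ` T"

lemma run_enc: "run T p w c r e \<Longrightarrow> oca_run (encT T) (to_nat p) w c (to_nat r) e"
proof (induction rule: run.induct)
  case (run_refl p c) then show ?case by (rule oca_refl)
next
  case (run_step p a c q n w r e)
  have "(to_nat p, a, c = 0, to_nat q, n) \<in> encT T" using run_step(1) by (force simp: encT_def)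
  then show ?case using run_step(3) by (intro oca_step) (auto simp: newc_def)
qed

lemma enc_run: "oca_run (encT T) P w c R e \<Longrightarrow> P = to_nat p \<Longrightarrow> R = to_nat r \<Longrightarrow> run T p w c r e"
proof (induction arbitrary: p rule: oca_run.induct)
  case (oca_refl p' c) then show ?case by (simp add: run_refl)
next
  case (oca_step p' a c q' n w r' e)
  then obtain p0 q0 where t: "(p0, a, c = 0, q0, n) \<in> T" "p' = to_nat p0" "q' = to_nat q0"
    by (auto simp: encT_def)
  then have "p0 = p" using oca_step by simp
  moreover have "run T q0 w (if c = 0 then n else c - 1 + n) r e" using oca_step t by blast
  ultimately show ?case using t by (intro run_step) (auto simp: newc_def)
qed


locale dfa2 =
  fixes XS :: "bool \<Rightarrow> nat set" and QS :: "bool \<Rightarrow> nat set" and q0S :: "bool \<Rightarrow> nat"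
    and FS :: "bool \<Rightarrow> nat set" and dS :: "bool \<Rightarrow> nat \<Rightarrow> nat \<Rightarrow> nat"
  assumes finX: "finite (XS Y)" and finQ: "finite (QS Y)" and q0Q: "q0S Y \<in> QS Y"
    and FQ: "FS Y \<subseteq> QS Y" and dQ: "q \<in> QS Y \<Longrightarrow> x \<in> XS Y \<Longrightarrow> dS Y q x \<in> QS Y"
begin

abbreviation "fd Y u q \<equiv> fold (\<lambda>x q. dS Y q x) u q"

lemma fd_Q: "q \<in> QS Y \<Longrightarrow> u \<in> lists (XS Y) \<Longrightarrow> fd Y u q \<in> QS Y"
  by (induction u arbitrary: q) (auto simp: dQ)

definition SL :: "bool \<Rightarrow> bool \<Rightarrow> nat list set" where
  "SL Y e = (\<lambda>u. if e then map (lcode Y True) u else map (lcode Y False) (rev u)) `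
     {u \<in> lists (XS Y). fd Y u (q0S Y) \<in> FS Y}"

inductive Cont :: "bool option \<Rightarrow> int \<Rightarrow> nat list \<Rightarrow> bool" where
  cnil: "S > 0 \<Longrightarrow> Cont (Some X) S []"
| ccons: "Some Y \<noteq> X \<Longrightarrow> u \<in> SL Y e \<Longrightarrow> Cont (Some Y) (S + jt X Y + sgnb e) w \<Longrightarrow> Cont X S (u @ w)"

definition "Tstart = (\<lambda>(Y, e). (Start, None, True, Mid Y e True, 0::nat)) ` UNIV"
definition "Tend = (\<lambda>(X, e, (b, z, b', n)). (EndS X b, None, z, Mid (\<not> X) e b', n)) `
   {(X, e, t). t \<in> opset X}"
definition "Tmidp = (\<lambda>(Y, (b, z, b', n)). (Mid Y True b, None, z, Rd Y True (q0S Y) b', n)) `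
   {(Y, t). t \<in> opset True}"
definition "Tmidn = (\<lambda>(Y, q, (b, z, b', n)). (Mid Y False b, None, z, Rd Y False q b', n)) `
   {(Y, q, t). q \<in> FS Y \<and> t \<in> opset False}"
definition "Trdp = (\<lambda>(Y, q, b, x, (z, n)). (Rd Y True q b, Some (lcode Y True x), z, Rd Y True (dS Y q x) b, n)) `
   {(Y, q, b, x, t). q \<in> QS Y \<and> x \<in> XS Y \<and> t \<in> keep}"
definition "Trdpe = (\<lambda>(Y, q, b, (z, n)). (Rd Y True q b, None, z, EndS Y b, n)) `
   {(Y, q, b, t). q \<in> FS Y \<and> t \<in> keep}"
definition "Trdn = (\<lambda>(Y, p, b, x, (z, n)). (Rd Y False (dS Y p x) b, Some (lcode Y False x), z, Rd Y False p b, n)) `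
   {(Y, p, b, x, t). p \<in> QS Y \<and> x \<in> XS Y \<and> t \<in> keep}"
definition "Trdne = (\<lambda>(Y, b, (z, n)). (Rd Y False (q0S Y) b, None, z, EndS Y b, n)) `
   {(Y, b, t). t \<in> keep}"
definition "Tacc = (\<lambda>X. (EndS X True, None, False, Acc, 0::nat)) ` UNIV"

definition "TT = Tstart \<union> Tend \<union> Tmidp \<union> Tmidn \<union> Trdp \<union> Trdpe \<union> Trdn \<union> Trdne \<union> Tacc"

fun Good :: "ost \<Rightarrow> nat \<Rightarrow> nat list \<Rightarrow> bool" where
  "Good Start c w = (c = 0 \<longrightarrow> Cont None 0 w)"
| "Good (EndS X b) c w = Cont (Some X) (val b c) w"
| "Good (Mid Y e b) c w = (\<exists>u w'. w = u @ w' \<and> u \<in> SL Y e \<and> Cont (Some Y) (val b c + sgnb e) w')"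
| "Good (Rd Y e q b) c w = (if e then
      (\<exists>u w'. w = map (lcode Y True) u @ w' \<and> u \<in> lists (XS Y) \<and> fd Y u q \<in> FS Y \<and> Cont (Some Y) (val b c) w')
    else (\<exists>u w'. w = map (lcode Y False) (rev u) @ w' \<and> u \<in> lists (XS Y) \<and> fd Y u (q0S Y) = q \<and> Cont (Some Y) (val b c) w'))"
| "Good Acc c w = (w = [])"

lemma good_step: assumes "(p, a, c = 0, q, n) \<in> TT" "Good q (newc c n) w"
  shows "Good p c (case a of None \<Rightarrow> w | Some x \<Rightarrow> x # w)"
proof -
  consider "(p, a, c = 0, q, n) \<in> Tstart" | "(p, a, c = 0, q, n) \<in> Tend" | "(p, a, c = 0, q, n) \<in> Tmidp"
    | "(p, a, c = 0, q, n) \<in> Tmidn" | "(p, a, c = 0, q, n) \<in> Trdp" | "(p, a, c = 0, q, n) \<in> Trdpe"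
    | "(p, a, c = 0, q, n) \<in> Trdn" | "(p, a, c = 0, q, n) \<in> Trdne" | "(p, a, c = 0, q, n) \<in> Tacc"
    using assms(1) unfolding TT_def by blast
  then show ?thesis
  proof cases
    case 1
    then obtain Y e where t: "p = Start" "a = None" "c = 0" "q = Mid Y e True" "n = 0"
      by (auto simp: Tstart_def)
    then obtain u w' where "w = u @ w'" "u \<in> SL Y e" "Cont (Some Y) (0 + jt None Y + sgnb e) w'"
      using assms(2) by (auto simp: val_def newc_def)
    then show ?thesis using t by (auto intro: ccons)
  next
    case 2
    then obtain X e b b' where t: "p = EndS X b" "a = None" "q = Mid (\<not> X) e b'" "(b, c = 0, b', n) \<in> opset X"
      by (auto simp: Tend_def)
    have v: "val b' (newc c n) = val b c + sgnb X" by (rule op_sound[OF t(4)])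
    obtain u w' where "w = u @ w'" "u \<in> SL (\<not> X) e" "Cont (Some (\<not> X)) (val b' (newc c n) + sgnb e) w'"
      using assms(2) t by auto
    moreover have "val b' (newc c n) = val b c + jt (Some X) (\<not> X)" using v by (simp add: sgnb_def)
    ultimately show ?thesis using t by (auto intro: ccons)
  next
    case 3
    then obtain Y b b' where t: "p = Mid Y True b" "a = None" "q = Rd Y True (q0S Y) b'" "(b, c = 0, b', n) \<in> opset True"
      by (auto simp: Tmidp_def)
    have v: "val b' (newc c n) = val b c + sgnb True" by (rule op_sound[OF t(4)])
    obtain u w' where "w = map (lcode Y True) u @ w'" "u \<in> lists (XS Y)" "fd Y u (q0S Y) \<in> FS Y"
      "Cont (Some Y) (val b' (newc c n)) w'"
      using assms(2) t by auto
    moreover then have "map (lcode Y True) u \<in> SL Y True" by (auto simp: SL_def)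
    ultimately show ?thesis using t v by auto
  next
    case 4
    then obtain Y qf b b' where t: "p = Mid Y False b" "a = None" "q = Rd Y False qf b'" "qf \<in> FS Y" "(b, c = 0, b', n) \<in> opset False"
      by (auto simp: Tmidn_def)
    have v: "val b' (newc c n) = val b c + sgnb False" by (rule op_sound[OF t(5)])
    obtain u w' where "w = map (lcode Y False) (rev u) @ w'" "u \<in> lists (XS Y)" "fd Y u (q0S Y) = qf"
      "Cont (Some Y) (val b' (newc c n)) w'"
      using assms(2) t by auto
    moreover then have "map (lcode Y False) (rev u) \<in> SL Y False" using t by (auto simp: SL_def)
    ultimately show ?thesis using t v by auto
  next
    case 5
    then obtain Y q1 b x where t: "p = Rd Y True q1 b" "a = Some (lcode Y True x)" "q = Rd Y True (dS Y q1 x) b"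
      "x \<in> XS Y" "(c = 0, n) \<in> keep"
      by (auto simp: Trdp_def)
    have v: "newc c n = c" using t by (intro keep_sound) auto
    obtain u w' where "w = map (lcode Y True) u @ w'" "u \<in> lists (XS Y)" "fd Y u (dS Y q1 x) \<in> FS Y"
      "Cont (Some Y) (val b c) w'"
      using assms(2) t v by auto
    then show ?thesis using t apply (simp only: Good.simps if_True option.simps)
      apply (rule exI[where x="x # u"], rule exI[where x=w']) by auto
  next
    case 6
    then obtain Y q1 b where t: "p = Rd Y True q1 b" "a = None" "q = EndS Y b" "q1 \<in> FS Y" "(c = 0, n) \<in> keep"
      by (auto simp: Trdpe_def)
    have v: "newc c n = c" using t by (intro keep_sound) auto
    then show ?thesis using t assms(2) apply (simp only: Good.simps if_True option.simps)
      apply (rule exI[where x="[]"], rule exI[where x=w]) by auto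
  next
    case 7
    then obtain Y p1 b x where t: "p = Rd Y False (dS Y p1 x) b" "a = Some (lcode Y False x)" "q = Rd Y False p1 b"
      "x \<in> XS Y" "(c = 0, n) \<in> keep"
      by (auto simp: Trdn_def)
    have v: "newc c n = c" using t by (intro keep_sound) auto
    obtain u w' where "w = map (lcode Y False) (rev u) @ w'" "u \<in> lists (XS Y)" "fd Y u (q0S Y) = p1"
      "Cont (Some Y) (val b c) w'"
      using assms(2) t v by auto
    then show ?thesis using t apply (simp only: Good.simps if_False option.simps)
      apply (rule exI[where x="u @ [x]"], rule exI[where x=w']) by auto
  next
    case 8
    then obtain Y b where t: "p = Rd Y False (q0S Y) b" "a = None" "q = EndS Y b" "(c = 0, n) \<in> keep"
      by (auto simp: Trdne_def)
    have v: "newc c n = c" using t by (intro keep_sound) auto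
    then show ?thesis using t assms(2) apply (simp only: Good.simps if_False option.simps)
      apply (rule exI[where x="[]"], rule exI[where x=w]) by auto
  next
    case 9
    then obtain X where t: "p = EndS X True" "a = None" "c \<noteq> 0" "q = Acc"
      by (auto simp: Tacc_def)
    then show ?thesis using assms(2) by (auto simp: val_def intro!: cnil)
  qed
qed

lemma run_sound: "run TT p w c r e \<Longrightarrow> r = Acc \<Longrightarrow> Good p c w"
proof (induction rule: run.induct)
  case (run_refl p c) then show ?case by simp
next
  case (run_step p a c q n w r e)
  then show ?case using good_step by blast
qed

end


context dfa2 begin

lemma mem_Tstart: "(Start, None, True, Mid Y e True, 0) \<in> TT"
proof -
  have "(Start, None, True, Mid Y e True, 0) \<in> Tstart"
    unfolding Tstart_def by (rule image_eqI[where x="(Y, e)"]) auto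
  then show ?thesis unfolding TT_def by blast
qed

lemma mem_Tend: "(b, z, b', n) \<in> opset X \<Longrightarrow> (EndS X b, None, z, Mid (\<not> X) e b', n) \<in> TT"
proof -
  assume h: "(b, z, b', n) \<in> opset X"
  have "(EndS X b, None, z, Mid (\<not> X) e b', n) \<in> Tend"
    unfolding Tend_def by (rule image_eqI[where x="(X, e, (b, z, b', n))"]) (use h in auto)
  then show ?thesis unfolding TT_def by blast
qed

lemma mem_Tmidp: "(b, z, b', n) \<in> opset True \<Longrightarrow> (Mid Y True b, None, z, Rd Y True (q0S Y) b', n) \<in> TT"
proof -
  assume h: "(b, z, b', n) \<in> opset True"
  have "(Mid Y True b, None, z, Rd Y True (q0S Y) b', n) \<in> Tmidp"
    unfolding Tmidp_def by (rule image_eqI[where x="(Y, (b, z, b', n))"]) (use h in auto)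
  then show ?thesis unfolding TT_def by blast
qed

lemma mem_Tmidn: "q \<in> FS Y \<Longrightarrow> (b, z, b', n) \<in> opset False \<Longrightarrow> (Mid Y False b, None, z, Rd Y False q b', n) \<in> TT"
proof -
  assume h: "(b, z, b', n) \<in> opset False" "q \<in> FS Y"
  have "(Mid Y False b, None, z, Rd Y False q b', n) \<in> Tmidn"
    unfolding Tmidn_def by (rule image_eqI[where x="(Y, q, (b, z, b', n))"]) (use h in auto)
  then show ?thesis unfolding TT_def by blast
qed

lemma mem_Trdp: "q \<in> QS Y \<Longrightarrow> x \<in> XS Y \<Longrightarrow> (z, n) \<in> keep \<Longrightarrow>
  (Rd Y True q b, Some (lcode Y True x), z, Rd Y True (dS Y q x) b, n) \<in> TT"
proof -
  assume h: "q \<in> QS Y" "x \<in> XS Y" "(z, n) \<in> keep"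
  have "(Rd Y True q b, Some (lcode Y True x), z, Rd Y True (dS Y q x) b, n) \<in> Trdp"
    unfolding Trdp_def by (rule image_eqI[where x="(Y, q, b, x, (z, n))"]) (use h in auto)
  then show ?thesis unfolding TT_def by blast
qed

lemma mem_Trdpe: "q \<in> FS Y \<Longrightarrow> (z, n) \<in> keep \<Longrightarrow> (Rd Y True q b, None, z, EndS Y b, n) \<in> TT"
proof -
  assume h: "q \<in> FS Y" "(z, n) \<in> keep"
  have "(Rd Y True q b, None, z, EndS Y b, n) \<in> Trdpe"
    unfolding Trdpe_def by (rule image_eqI[where x="(Y, q, b, (z, n))"]) (use h in auto)
  then show ?thesis unfolding TT_def by blast
qed

lemma mem_Trdn: "p \<in> QS Y \<Longrightarrow> x \<in> XS Y \<Longrightarrow> (z, n) \<in> keep \<Longrightarrow>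
  (Rd Y False (dS Y p x) b, Some (lcode Y False x), z, Rd Y False p b, n) \<in> TT"
proof -
  assume h: "p \<in> QS Y" "x \<in> XS Y" "(z, n) \<in> keep"
  have "(Rd Y False (dS Y p x) b, Some (lcode Y False x), z, Rd Y False p b, n) \<in> Trdn"
    unfolding Trdn_def by (rule image_eqI[where x="(Y, p, b, x, (z, n))"]) (use h in auto)
  then show ?thesis unfolding TT_def by blast
qed

lemma mem_Trdne: "(z, n) \<in> keep \<Longrightarrow> (Rd Y False (q0S Y) b, None, z, EndS Y b, n) \<in> TT"
proof -
  assume h: "(z, n) \<in> keep"
  have "(Rd Y False (q0S Y) b, None, z, EndS Y b, n) \<in> Trdne"
    unfolding Trdne_def by (rule image_eqI[where x="(Y, b, (z, n))"]) (use h in auto)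
  then show ?thesis unfolding TT_def by blast
qed

lemma mem_Tacc: "(EndS X True, None, False, Acc, 0) \<in> TT"
proof -
  have "(EndS X True, None, False, Acc, 0) \<in> Tacc"
    unfolding Tacc_def by (rule image_eqI[where x="X"]) auto
  then show ?thesis unfolding TT_def by blast
qed

lemma step0: "(p, None, c = 0, q, n) \<in> TT \<Longrightarrow> run TT q w (newc c n) r e \<Longrightarrow> run TT p w c r e"
  using run_step[of p None c q n TT w r e] by simp

lemma step1: "(p, Some x, c = 0, q, n) \<in> TT \<Longrightarrow> run TT q w (newc c n) r e \<Longrightarrow> run TT p (x # w) c r e"
  using run_step[of p "Some x" c q n TT w r e] by simp

lemma read_pos: "q \<in> QS Y \<Longrightarrow> u \<in> lists (XS Y) \<Longrightarrow>
  run TT (Rd Y True q b) (map (lcode Y True) u) c (Rd Y True (fd Y u q) b) c"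
proof (induction u arbitrary: q)
  case Nil then show ?case by (simp add: run_refl)
next
  case (Cons x u)
  obtain n where n: "(c = 0, n) \<in> keep" "newc c n = c" using keep_complete by blast
  have "run TT (Rd Y True (dS Y q x) b) (map (lcode Y True) u) c (Rd Y True (fd Y u (dS Y q x)) b) c"
    using Cons dQ by auto
  then show ?case using step1[OF mem_Trdp[of q Y x "c = 0" n b]] Cons n by auto
qed

lemma read_neg: "u \<in> lists (XS Y) \<Longrightarrow>
  run TT (Rd Y False (fd Y u (q0S Y)) b) (map (lcode Y False) (rev u)) c (Rd Y False (q0S Y) b) c"
proof (induction u rule: rev_induct)
  case Nil then show ?case by (simp add: run_refl)
next
  case (snoc x u)
  obtain n where n: "(c = 0, n) \<in> keep" "newc c n = c" using keep_complete by blast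
  have p: "fd Y u (q0S Y) \<in> QS Y" using snoc fd_Q q0Q by auto
  have "run TT (Rd Y False (fd Y u (q0S Y)) b) (map (lcode Y False) (rev u)) c (Rd Y False (q0S Y) b) c"
    using snoc by auto
  then show ?case using step1[OF mem_Trdn[OF p _ n(1), of x b]] snoc n by auto
qed

fun stX :: "bool option \<Rightarrow> bool \<Rightarrow> ost" where
  "stX None b = Start" | "stX (Some X) b = EndS X b"

lemma syl_run: assumes "u \<in> SL Y e"
  shows "\<exists>b2 c2. run TT (Mid Y e b1) u c1 (EndS Y b2) c2 \<and> val b2 c2 = val b1 c1 + sgnb e"
proof -
  from assms obtain v where v0: "v \<in> {u \<in> lists (XS Y). fd Y u (q0S Y) \<in> FS Y}"
    "u = (\<lambda>u. if e then map (lcode Y True) u else map (lcode Y False) (rev u)) v"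
    unfolding SL_def by (rule imageE)
  then have v: "v \<in> lists (XS Y)" "fd Y v (q0S Y) \<in> FS Y"
    "u = (if e then map (lcode Y True) v else map (lcode Y False) (rev v))" by auto
  obtain b2 n where o: "(b1, c1 = 0, b2, n) \<in> opset e" "val b2 (newc c1 n) = val b1 c1 + sgnb e"
    using op_complete by blast
  obtain n' where n': "(newc c1 n = 0, n') \<in> keep" "newc (newc c1 n) n' = newc c1 n" using keep_complete by blast
  show ?thesis
  proof (cases e)
    case True
    have r1: "run TT (Rd Y True (fd Y v (q0S Y)) b2) [] (newc c1 n) (EndS Y b2) (newc c1 n)"
      using step0[OF mem_Trdpe[OF v(2) n'(1)]] n' by (simp add: run_refl)
    have "run TT (Rd Y True (q0S Y) b2) (map (lcode Y True) v @ []) (newc c1 n) (EndS Y b2) (newc c1 n)"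
      by (rule run_trans[OF read_pos[OF q0Q v(1)] r1])
    then have "run TT (Mid Y e b1) u c1 (EndS Y b2) (newc c1 n)"
      using step0[OF mem_Tmidp] o True v(3) by auto
    then show ?thesis using o by blast
  next
    case False
    have r1: "run TT (Rd Y False (q0S Y) b2) [] (newc c1 n) (EndS Y b2) (newc c1 n)"
      using step0[OF mem_Trdne[OF n'(1)]] n' by (simp add: run_refl)
    have "run TT (Rd Y False (fd Y v (q0S Y)) b2) (map (lcode Y False) (rev v) @ []) (newc c1 n) (EndS Y b2) (newc c1 n)"
      by (rule run_trans[OF read_neg[OF v(1)] r1])
    then have "run TT (Mid Y e b1) u c1 (EndS Y b2) (newc c1 n)"
      using step0[OF mem_Tmidn[OF v(2)]] o False v(3) by auto
    then show ?thesis using o by blast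
  qed
qed

lemma run_complete: "Cont X S w \<Longrightarrow> (X = None \<longrightarrow> S = 0) \<Longrightarrow> val b c = S \<Longrightarrow> \<exists>e. run TT (stX X b) w c Acc e"
proof (induction arbitrary: b c rule: Cont.induct)
  case (cnil S X)
  then have "b" "c \<noteq> 0" by (auto simp: val_def split: if_splits)
  moreover have "(EndS X True, None, c = 0, Acc, 0) \<in> TT" using mem_Tacc[of X] \<open>c \<noteq> 0\<close> by simp
  ultimately show ?case using step0 run_refl by fastforce
next
  case (ccons Y X u e S w)
  have A: "\<exists>b1 c1. run TT (stX X b) [] c (Mid Y e b1) c1 \<and> val b1 c1 = S + jt X Y"
  proof (cases X)
    case None
    then have "c = 0" using ccons.prems by (auto simp: val_def split: if_splits)
    moreover have "(Start, None, c = 0, Mid Y e True, 0) \<in> TT" using mem_Tstart[of Y e] \<open>c = 0\<close> by simp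
    ultimately have "run TT (stX X b) [] c (Mid Y e True) 0"
      using None step0 by (simp add: run_refl newc_def)
    then show ?thesis using None ccons.prems by (auto simp: val_def)
  next
    case (Some X')
    then have Y: "Y = (\<not> X')" using ccons.hyps(1) by auto
    obtain b1 n where o: "(b, c = 0, b1, n) \<in> opset X'" "val b1 (newc c n) = val b c + sgnb X'"
      using op_complete by blast
    have "run TT (stX X b) [] c (Mid Y e b1) (newc c n)"
      using Some Y step0[OF mem_Tend[OF o(1)] run_refl] by simp
    moreover have "val b1 (newc c n) = S + jt X Y" using o Some Y ccons.prems by (auto simp: sgnb_def)
    ultimately show ?thesis by blast
  qed
  then obtain b1 c1 where r1: "run TT (stX X b) [] c (Mid Y e b1) c1" "val b1 c1 = S + jt X Y" by blast
  obtain b2 c2 where r2: "run TT (Mid Y e b1) u c1 (EndS Y b2) c2" "val b2 c2 = val b1 c1 + sgnb e"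
    using syl_run[OF ccons.hyps(2)] by blast
  obtain e' where r3: "run TT (EndS Y b2) w c2 Acc e'" using ccons.IH[of b2 c2] r1 r2 by auto
  have "run TT (stX X b) ([] @ u @ w) c Acc e'" using run_trans[OF r1(1) run_trans[OF r2(1) r3]] .
  then show ?case by auto
qed

end


context dfa2 begin

definition "Xall = (\<lambda>(Y, e, x). lcode Y e x) ` {(Y, e, x). x \<in> XS Y}"

lemma lcode_Xall: "x \<in> XS Y \<Longrightarrow> lcode Y e x \<in> Xall"
  unfolding Xall_def by (rule image_eqI[where x="(Y, e, x)"]) auto

lemma finite_Xall: "finite Xall"
proof -
  have "{(Y, e, x). x \<in> XS Y} \<subseteq> (UNIV \<times> UNIV \<times> (XS True \<union> XS False))"
    by (auto, case_tac a, auto)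
  then have "Xall \<subseteq> (\<lambda>(Y, e, x). lcode Y e x) ` (UNIV \<times> UNIV \<times> (XS True \<union> XS False))"
    unfolding Xall_def by (rule image_mono)
  moreover have "finite (UNIV \<times> UNIV \<times> (XS True \<union> XS False) :: (bool \<times> bool \<times> nat) set)"
    using finX by auto
  ultimately show ?thesis by (meson finite_imageI finite_subset)
qed

lemma SL_lists: "u \<in> SL Y e \<Longrightarrow> u \<in> lists Xall"
  by (force simp: SL_def intro!: lcode_Xall)

lemma Cont_lists: "Cont X S w \<Longrightarrow> w \<in> lists Xall"
  by (induction rule: Cont.induct) (auto dest: SL_lists)

lemma finite_TT: "finite TT"
proof -
  let ?Q = "QS True \<union> QS False" and ?X = "XS True \<union> XS False" and ?O = "opset True \<union> opset False"
  have fQ: "finite ?Q" "finite ?X" "finite ?O" using finQ finX finite_opset by auto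
  have FQ': "FS Y \<subseteq> ?Q" for Y using FQ by (cases Y) auto
  have OO: "opset Y \<subseteq> ?O" for Y by (cases Y) auto
  have QQ: "QS Y \<subseteq> ?Q" "XS Y \<subseteq> ?X" for Y by (cases Y; auto)+
  have D: "\<And>q Y. q \<in> FS Y \<Longrightarrow> q \<in> ?Q" "\<And>q Y. q \<in> QS Y \<Longrightarrow> q \<in> ?Q"
    "\<And>q Y. q \<in> XS Y \<Longrightarrow> q \<in> ?X" "\<And>q Y. q \<in> opset Y \<Longrightarrow> q \<in> ?O"
    using FQ' QQ OO by blast+
  have "finite Tstart" unfolding Tstart_def by simp
  moreover have "finite Tend" unfolding Tend_def
    by (rule finite_imageI, rule finite_subset[of _ "UNIV \<times> UNIV \<times> ?O"]) (use fQ in \<open>auto dest: D\<close>)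
  moreover have "finite Tmidp" unfolding Tmidp_def
    by (rule finite_imageI, rule finite_subset[of _ "UNIV \<times> ?O"]) (use fQ in \<open>auto dest: D\<close>)
  moreover have "finite Tmidn" unfolding Tmidn_def
    by (rule finite_imageI, rule finite_subset[of _ "UNIV \<times> ?Q \<times> ?O"]) (use fQ in \<open>auto dest: D\<close>)
  moreover have "finite Trdp" unfolding Trdp_def
    by (rule finite_imageI, rule finite_subset[of _ "UNIV \<times> ?Q \<times> UNIV \<times> ?X \<times> keep"])
       (use fQ finite_keep in \<open>auto dest: D\<close>)
  moreover have "finite Trdpe" unfolding Trdpe_def
    by (rule finite_imageI, rule finite_subset[of _ "UNIV \<times> ?Q \<times> UNIV \<times> keep"])
       (use fQ finite_keep in \<open>auto dest: D\<close>)
  moreover have "finite Trdn" unfolding Trdn_def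
    by (rule finite_imageI, rule finite_subset[of _ "UNIV \<times> ?Q \<times> UNIV \<times> ?X \<times> keep"])
       (use fQ finite_keep in \<open>auto dest: D\<close>)
  moreover have "finite Trdne" unfolding Trdne_def
    by (rule finite_imageI, rule finite_subset[of _ "UNIV \<times> UNIV \<times> keep"])
       (use fQ finite_keep in \<open>auto dest: D\<close>)
  moreover have "finite Tacc" unfolding Tacc_def by simp
  ultimately show ?thesis unfolding TT_def by simp
qed

lemma TT_letters: "(p, a, z, q, n) \<in> TT \<Longrightarrow> set_option a \<subseteq> Xall"
  unfolding TT_def Tstart_def Tend_def Tmidp_def Tmidn_def Trdp_def Trdpe_def Trdn_def Trdne_def Tacc_def
  by (auto intro: lcode_Xall)

lemma one_counter_Cont: "one_counter_lang Xall {w. Cont None 0 w}"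
proof -
  let ?T = "encT TT"
  let ?S = "{Start} \<union> (\<lambda>(p, _). p) ` TT \<union> (\<lambda>(_, _, _, q, _). q) ` TT"
  let ?Q = "to_nat ` ?S"
  have fT: "finite ?T" unfolding encT_def using finite_TT by simp
  have fQ: "finite ?Q" using finite_TT by simp
  have q0: "to_nat Start \<in> ?Q" by simp
  have "(EndS True True, None, False, Acc, 0) \<in> TT" by (rule mem_Tacc)
  then have "Acc \<in> ?S" by force
  then have F: "{to_nat Acc} \<subseteq> ?Q" by simp
  have tr: "\<forall>(p, a, z, q, n)\<in>?T. p \<in> ?Q \<and> q \<in> ?Q \<and> set_option a \<subseteq> Xall"
    unfolding encT_def using TT_letters by force
  have L: "{w. Cont None 0 w} = oca_lang (to_nat Start) {to_nat Acc} ?T"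
  proof (intro equalityI subsetI)
    fix w assume "w \<in> {w. Cont None 0 w}"
    then have "Cont None 0 w" by simp
    from run_complete[OF this, of True 0] obtain e where "run TT Start w 0 Acc e" by (auto simp: val_def)
    then show "w \<in> oca_lang (to_nat Start) {to_nat Acc} ?T"
      unfolding oca_lang_def using run_enc by blast
  next
    fix w assume "w \<in> oca_lang (to_nat Start) {to_nat Acc} ?T"
    then obtain e where "oca_run ?T (to_nat Start) w 0 (to_nat Acc) e" unfolding oca_lang_def by auto
    then have "run TT Start w 0 Acc e" using enc_run by blast
    then have "Good Start 0 w" using run_sound by blast
    then show "w \<in> {w. Cont None 0 w}" by simp
  qed
  show ?thesis unfolding one_counter_lang_def
    using fT fQ q0 F tr L by blast
qed

end


locale fpall = fp2c A B PA PB + dfa2 XS QS q0S FS dS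
  for A :: "('a, 'm) monoid_scheme" and B :: "('b, 'n) monoid_scheme" and PA PB XS QS q0S FS dS +
  fixes fA :: "nat \<Rightarrow> 'a" and fB :: "nat \<Rightarrow> 'b"
  assumes fA_c: "fA ` XS True \<subseteq> carrier A" and fB_c: "fB ` XS False \<subseteq> carrier B"
    and genA: "eval_word A fA ` lists (XS True) = carrier A"
    and genB: "eval_word B fB ` lists (XS False) = carrier B"
    and conA: "eval_word A fA ` {u \<in> lists (XS True). fd True u (q0S True) \<in> FS True} = PA"
    and conB: "eval_word B fB ` {u \<in> lists (XS False). fd False u (q0S False) \<in> FS False} = PB"
begin

interpretation GA: group A by (rule grA)
interpretation GB: group B by (rule grB)

definition ff :: "nat \<Rightarrow> ('a + 'b) list" where
  "ff n = (if n mod 4 = 0 then fc (Inl (fA (n div 4))) []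
     else if n mod 4 = 1 then fc (Inl (inv\<^bsub>A\<^esub> (fA (n div 4)))) []
     else if n mod 4 = 2 then fc (Inr (fB (n div 4))) []
     else fc (Inr (inv\<^bsub>B\<^esub> (fB (n div 4)))) [])"

lemma lcode_div: "lcode Y e x div 4 = x" by (cases Y; cases e) (simp_all add: lcode_def)
lemma lcode_mod: "lcode Y e x mod 4 = (if Y then 0 else 2) + (if e then 0 else 1)"
  by (cases Y; cases e; simp add: lcode_def; presburger)

lemma ff_code:
  "ff (lcode True True x) = fc (Inl (fA x)) []"
  "ff (lcode True False x) = fc (Inl (inv\<^bsub>A\<^esub> (fA x))) []"
  "ff (lcode False True x) = fc (Inr (fB x)) []"
  "ff (lcode False False x) = fc (Inr (inv\<^bsub>B\<^esub> (fB x))) []"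
  by (simp_all only: ff_def lcode_div lcode_mod) simp_all

abbreviation "GG \<equiv> free_product A B"
abbreviation "ev \<equiv> eval_word GG ff"

lemma ev_Nil: "ev [] = []" by (simp add: eval_word_def FP_simps)
lemma ev_Cons: "ev (n # w) = mu (ff n) (ev w)" by (simp add: eval_word_def free_product_def)

lemma fA_in: "x \<in> XS True \<Longrightarrow> fA x \<in> carrier A" using fA_c by auto
lemma fB_in: "x \<in> XS False \<Longrightarrow> fB x \<in> carrier B" using fB_c by auto

lemma red_fc_nil: "okl A B x \<Longrightarrow> red (fc x [])" using fc_red[of x "[]"] by simp

lemma ff_red: "n \<in> Xall \<Longrightarrow> red (ff n)"
proof -
  assume "n \<in> Xall"
  then obtain Y e x where n: "n = lcode Y e x" "x \<in> XS Y" by (auto simp: Xall_def)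
  then show ?thesis
    by (cases Y; cases e) (auto simp: ff_code intro!: red_fc_nil simp: okl_def fA_in fB_in)
qed

lemma ev_red: "w \<in> lists Xall \<Longrightarrow> red (ev w)"
  by (induction w) (auto simp: ev_Nil ev_Cons ff_red mu_red)

lemma ev_append: "w1 \<in> lists Xall \<Longrightarrow> w2 \<in> lists Xall \<Longrightarrow> ev (w1 @ w2) = mu (ev w1) (ev w2)"
proof (induction w1)
  case Nil then show ?case by (simp add: ev_Nil)
next
  case (Cons n w1)
  then show ?case by (simp add: ev_Cons mu_assoc ff_red ev_red)
qed

lemma mu_syl: "red z \<Longrightarrow> okl A B x \<Longrightarrow> mu (fc x []) z = fc x z"
  using mu_fc[of x "[]" z] by simp

lemma ev_posA: "u \<in> lists (XS True) \<Longrightarrow> ev (map (lcode True True) u) = fc (Inl (eval_word A fA u)) []"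
proof (induction u)
  case Nil then show ?case by (simp add: ev_Nil eval_word_def FP_simps)
next
  case (Cons x u)
  have c: "eval_word A fA u \<in> carrier A"
    using genA Cons by auto
  have "ev (map (lcode True True) (x # u)) = mu (fc (Inl (fA x)) []) (fc (Inl (eval_word A fA u)) [])"
    using Cons by (simp add: ev_Cons ff_code)
  also have "\<dots> = fc (Inl (fA x)) (fc (Inl (eval_word A fA u)) [])"
    using c Cons fA_in by (intro mu_syl red_fc_nil) (auto simp: okl_def)
  also have "\<dots> = fc (Inl (fA x \<otimes>\<^bsub>A\<^esub> eval_word A fA u)) []" using c Cons fA_in by (intro fc_fc_l) auto
  finally show ?case by (simp add: eval_word_def)
qed

lemma ev_posB: "u \<in> lists (XS False) \<Longrightarrow> ev (map (lcode False True) u) = fc (Inr (eval_word B fB u)) []"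
proof (induction u)
  case Nil then show ?case by (simp add: ev_Nil eval_word_def FP_simps)
next
  case (Cons x u)
  have c: "eval_word B fB u \<in> carrier B"
    using genB Cons by auto
  have "ev (map (lcode False True) (x # u)) = mu (fc (Inr (fB x)) []) (fc (Inr (eval_word B fB u)) [])"
    using Cons by (simp add: ev_Cons ff_code)
  also have "\<dots> = fc (Inr (fB x)) (fc (Inr (eval_word B fB u)) [])"
    using c Cons fB_in by (intro mu_syl red_fc_nil) (auto simp: okl_def)
  also have "\<dots> = fc (Inr (fB x \<otimes>\<^bsub>B\<^esub> eval_word B fB u)) []" using c Cons fB_in by (intro fc_fc_r) auto
  finally show ?case by (simp add: eval_word_def)
qed

lemma lcode_lists: "u \<in> lists (XS Y) \<Longrightarrow> map (lcode Y e) u \<in> lists Xall"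
  by (induction u) (auto intro: lcode_Xall)

lemma ev_negA: "u \<in> lists (XS True) \<Longrightarrow> ev (map (lcode True False) (rev u)) = fc (Inl (inv\<^bsub>A\<^esub> (eval_word A fA u))) []"
proof (induction u)
  case Nil then show ?case by (simp add: ev_Nil eval_word_def FP_simps)
next
  case (Cons x u)
  have c: "eval_word A fA u \<in> carrier A" using genA Cons by auto
  have x: "fA x \<in> carrier A" using Cons fA_in by auto
  have l: "map (lcode True False) (rev u) \<in> lists Xall" "[lcode True False x] \<in> lists Xall"
    using Cons lcode_lists[of "rev u" True False] lcode_Xall by auto
  have "ev (map (lcode True False) (rev (x # u))) = mu (ev (map (lcode True False) (rev u))) (ev [lcode True False x])"
    using ev_append[OF l] by simp
  also have "\<dots> = mu (fc (Inl (inv\<^bsub>A\<^esub> (eval_word A fA u))) []) (fc (Inl (inv\<^bsub>A\<^esub> (fA x))) [])"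
    using Cons by (simp add: ev_Cons ev_Nil ff_code)
  also have "\<dots> = fc (Inl (inv\<^bsub>A\<^esub> (eval_word A fA u))) (fc (Inl (inv\<^bsub>A\<^esub> (fA x))) [])"
    using c x by (intro mu_syl red_fc_nil) (auto simp: okl_def)
  also have "\<dots> = fc (Inl (inv\<^bsub>A\<^esub> (eval_word A fA u) \<otimes>\<^bsub>A\<^esub> inv\<^bsub>A\<^esub> (fA x))) []"
    using c x by (intro fc_fc_l) auto
  also have "inv\<^bsub>A\<^esub> (eval_word A fA u) \<otimes>\<^bsub>A\<^esub> inv\<^bsub>A\<^esub> (fA x) = inv\<^bsub>A\<^esub> (eval_word A fA (x # u))"
    using c x by (simp add: eval_word_def GA.inv_mult_group)
  finally show ?case .
qed

lemma ev_negB: "u \<in> lists (XS False) \<Longrightarrow> ev (map (lcode False False) (rev u)) = fc (Inr (inv\<^bsub>B\<^esub> (eval_word B fB u))) []"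
proof (induction u)
  case Nil then show ?case by (simp add: ev_Nil eval_word_def FP_simps)
next
  case (Cons x u)
  have c: "eval_word B fB u \<in> carrier B" using genB Cons by auto
  have x: "fB x \<in> carrier B" using Cons fB_in by auto
  have l: "map (lcode False False) (rev u) \<in> lists Xall" "[lcode False False x] \<in> lists Xall"
    using Cons lcode_lists[of "rev u" False False] lcode_Xall by auto
  have "ev (map (lcode False False) (rev (x # u))) = mu (ev (map (lcode False False) (rev u))) (ev [lcode False False x])"
    using ev_append[OF l] by simp
  also have "\<dots> = mu (fc (Inr (inv\<^bsub>B\<^esub> (eval_word B fB u))) []) (fc (Inr (inv\<^bsub>B\<^esub> (fB x))) [])"
    using Cons by (simp add: ev_Cons ev_Nil ff_code)
  also have "\<dots> = fc (Inr (inv\<^bsub>B\<^esub> (eval_word B fB u))) (fc (Inr (inv\<^bsub>B\<^esub> (fB x))) [])"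
    using c x by (intro mu_syl red_fc_nil) (auto simp: okl_def)
  also have "\<dots> = fc (Inr (inv\<^bsub>B\<^esub> (eval_word B fB u) \<otimes>\<^bsub>B\<^esub> inv\<^bsub>B\<^esub> (fB x))) []"
    using c x by (intro fc_fc_r) auto
  also have "inv\<^bsub>B\<^esub> (eval_word B fB u) \<otimes>\<^bsub>B\<^esub> inv\<^bsub>B\<^esub> (fB x) = inv\<^bsub>B\<^esub> (eval_word B fB (x # u))"
    using c x by (simp add: eval_word_def GB.inv_mult_group)
  finally show ?case .
qed

end


context fpall begin

interpretation GA: group A by (rule grA)
interpretation GB: group B by (rule grB)

lemma SL_ev: assumes "u \<in> SL Y e"
  shows "\<exists>x. ev u = [x] \<and> isl x = Y \<and> okl A B x \<and> ntl A B x \<and> sgn' x = sgnb e"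
proof -
  from assms obtain v where v0: "v \<in> {u \<in> lists (XS Y). fd Y u (q0S Y) \<in> FS Y}"
    "u = (\<lambda>u. if e then map (lcode Y True) u else map (lcode Y False) (rev u)) v"
    unfolding SL_def by (rule imageE)
  then have v: "v \<in> lists (XS Y)" "fd Y v (q0S Y) \<in> FS Y"
    "u = (if e then map (lcode Y True) v else map (lcode Y False) (rev v))" by auto
  show ?thesis
  proof (cases Y)
    case True
    let ?a = "eval_word A fA v"
    have "v \<in> {u \<in> lists (XS True). fd True u (q0S True) \<in> FS True}" using v True by simp
    then have a: "?a \<in> PA" using conA by blast
    have ac: "?a \<in> carrier A" "?a \<noteq> \<one>\<^bsub>A\<^esub>" using a cone_facts(1,2)[OF cA] by auto
    show ?thesis
    proof (cases e)
      case True
      then show ?thesis using v \<open>Y\<close> ev_posA[of v] a ac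
        by (auto simp: okl_def ntl_def sg_def sgnb_def)
    next
      case False
      have "inv\<^bsub>A\<^esub> ?a \<notin> PA" using cone_facts(4)[OF cA] ac a by auto
      moreover have "inv\<^bsub>A\<^esub> ?a \<noteq> \<one>\<^bsub>A\<^esub>" using ac by (metis GA.inv_eq_1_iff)
      ultimately show ?thesis using v \<open>Y\<close> False ev_negA[of v] ac
        by (auto simp: okl_def ntl_def sg_def sgnb_def)
    qed
  next
    case False
    let ?a = "eval_word B fB v"
    have "v \<in> {u \<in> lists (XS False). fd False u (q0S False) \<in> FS False}" using v False by simp
    then have a: "?a \<in> PB" using conB by blast
    have ac: "?a \<in> carrier B" "?a \<noteq> \<one>\<^bsub>B\<^esub>" using a cone_facts(1,2)[OF cB] by auto
    show ?thesis
    proof (cases e)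
      case True
      then show ?thesis using v \<open>\<not> Y\<close> ev_posB[of v] a ac
        by (auto simp: okl_def ntl_def sg_def sgnb_def)
    next
      case False
      have "inv\<^bsub>B\<^esub> ?a \<notin> PB" using cone_facts(4)[OF cB] ac a by auto
      moreover have "inv\<^bsub>B\<^esub> ?a \<noteq> \<one>\<^bsub>B\<^esub>" using ac by (metis GB.inv_eq_1_iff)
      ultimately show ?thesis using v \<open>\<not> Y\<close> False ev_negB[of v] ac
        by (auto simp: okl_def ntl_def sg_def sgnb_def)
    qed
  qed
qed

lemma SL_complete: assumes "okl A B x" "ntl A B x"
  shows "\<exists>u e. u \<in> SL (isl x) e \<and> ev u = [x] \<and> sgnb e = sgn' x"
proof (cases x)
  case (Inl a)
  have ac: "a \<in> carrier A" "a \<noteq> \<one>\<^bsub>A\<^esub>" using assms Inl by (auto simp: okl_def ntl_def)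
  show ?thesis
  proof (cases "a \<in> PA")
    case True
    then have "a \<in> eval_word A fA ` {u \<in> lists (XS True). fd True u (q0S True) \<in> FS True}" using conA by simp
    then obtain v where v0: "v \<in> {u \<in> lists (XS True). fd True u (q0S True) \<in> FS True}" "a = eval_word A fA v"
      by (rule imageE)
    then have v: "v \<in> lists (XS True)" "fd True v (q0S True) \<in> FS True" "eval_word A fA v = a" by simp_all
    have "map (lcode True True) v \<in> SL True True" unfolding SL_def using v by auto
    then show ?thesis using v Inl ev_posA[of v] ac True
      by (intro exI[of _ "map (lcode True True) v"] exI[of _ True]) (auto simp: sg_def sgnb_def)
  next
    case False
    then have ia: "inv\<^bsub>A\<^esub> a \<in> PA" using cone_facts(5)[OF cA] ac by auto
    then have "inv\<^bsub>A\<^esub> a \<in> eval_word A fA ` {u \<in> lists (XS True). fd True u (q0S True) \<in> FS True}" using conA by simp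
    then obtain v where v0: "v \<in> {u \<in> lists (XS True). fd True u (q0S True) \<in> FS True}" "inv\<^bsub>A\<^esub> a = eval_word A fA v"
      by (rule imageE)
    then have v: "v \<in> lists (XS True)" "fd True v (q0S True) \<in> FS True" "eval_word A fA v = inv\<^bsub>A\<^esub> a" by simp_all
    have "map (lcode True False) (rev v) \<in> SL True False" unfolding SL_def using v by auto
    then show ?thesis using v Inl ev_negA[of v] ac False
      by (intro exI[of _ "map (lcode True False) (rev v)"] exI[of _ False]) (auto simp: sg_def sgnb_def)
  qed
next
  case (Inr a)
  have ac: "a \<in> carrier B" "a \<noteq> \<one>\<^bsub>B\<^esub>" using assms Inr by (auto simp: okl_def ntl_def)
  show ?thesis
  proof (cases "a \<in> PB")
    case True
    then have "a \<in> eval_word B fB ` {u \<in> lists (XS False). fd False u (q0S False) \<in> FS False}" using conB by simp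
    then obtain v where v0: "v \<in> {u \<in> lists (XS False). fd False u (q0S False) \<in> FS False}" "a = eval_word B fB v"
      by (rule imageE)
    then have v: "v \<in> lists (XS False)" "fd False v (q0S False) \<in> FS False" "eval_word B fB v = a" by simp_all
    have "map (lcode False True) v \<in> SL False True" unfolding SL_def using v by auto
    then show ?thesis using v Inr ev_posB[of v] ac True
      by (intro exI[of _ "map (lcode False True) v"] exI[of _ True]) (auto simp: sg_def sgnb_def)
  next
    case False
    then have ia: "inv\<^bsub>B\<^esub> a \<in> PB" using cone_facts(5)[OF cB] ac by auto
    then have "inv\<^bsub>B\<^esub> a \<in> eval_word B fB ` {u \<in> lists (XS False). fd False u (q0S False) \<in> FS False}" using conB by simp
    then obtain v where v0: "v \<in> {u \<in> lists (XS False). fd False u (q0S False) \<in> FS False}" "inv\<^bsub>B\<^esub> a = eval_word B fB v"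
      by (rule imageE)
    then have v: "v \<in> lists (XS False)" "fd False v (q0S False) \<in> FS False" "eval_word B fB v = inv\<^bsub>B\<^esub> a" by simp_all
    have "map (lcode False False) (rev v) \<in> SL False False" unfolding SL_def using v by auto
    then show ?thesis using v Inr ev_negB[of v] ac False
      by (intro exI[of _ "map (lcode False False) (rev v)"] exI[of _ False]) (auto simp: sg_def sgnb_def)
  qed
qed

end


context fpall begin

interpretation GA: group A by (rule grA)
interpretation GB: group B by (rule grB)

definition PP :: "bool option \<Rightarrow> int \<Rightarrow> ('a + 'b) list \<Rightarrow> bool" where
  "PP X S s \<longleftrightarrow> (s = [] \<longrightarrow> S > 0 \<and> X \<noteq> None) \<and>
     (s \<noteq> [] \<longrightarrow> X \<noteq> Some (isl (hd s)) \<and> S + jt X (isl (hd s)) + ph s > 0)"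

lemma jt_jn: "jt (Some (isl x)) (isl y) = jn x y" by (simp add: jn_def)

lemma ev_single: "u \<in> lists Xall \<Longrightarrow> w \<in> lists Xall \<Longrightarrow> ev u = [x] \<Longrightarrow> ev (u @ w) = fc x (ev w)"
  using ev_append[of u w] by simp

lemma Cont_ev: "Cont X S w \<Longrightarrow> red (ev w) \<and> PP X S (ev w)"
proof (induction rule: Cont.induct)
  case (cnil S X) then show ?case by (simp add: ev_Nil PP_def)
next
  case (ccons Y X u e S w)
  obtain x where x: "ev u = [x]" "isl x = Y" "okl A B x" "ntl A B x" "sgn' x = sgnb e"
    using SL_ev[OF ccons.hyps(2)] by blast
  have wl: "w \<in> lists Xall" "u \<in> lists Xall" using Cont_lists[OF ccons.hyps(3)] SL_lists[OF ccons.hyps(2)] by auto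
  let ?s = "ev w"
  have IH: "red ?s" "PP (Some Y) (S + jt X Y + sgnb e) ?s" using ccons.IH by auto
  have d: "?s = [] \<or> isl (hd ?s) \<noteq> isl x" using IH x by (auto simp: PP_def)
  have e: "ev (u @ w) = x # ?s" using ev_single[OF wl(2) wl(1) x(1)] fc_diff[OF x(4) d] by simp
  have r: "red (x # ?s)" using IH x d by (auto simp: red_Cons)
  have "PP X S (x # ?s)"
  proof (cases "?s = []")
    case True
    then show ?thesis using IH x ccons.hyps(1) by (auto simp: PP_def)
  next
    case False
    have "ph (x # ?s) = sgn' x + jn x (hd ?s) + ph ?s" using False phi_Cons[of x ?s] by (simp add: JJ_def)
    moreover have "jn x (hd ?s) = jt (Some Y) (isl (hd ?s))" using x(2) jt_jn[of x "hd ?s"] by simp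
    ultimately show ?thesis using IH x ccons.hyps(1) False by (auto simp: PP_def)
  qed
  then show ?case using e r by simp
qed

lemma Cont_complete: "red s \<Longrightarrow> PP X S s \<Longrightarrow> \<exists>w. Cont X S w \<and> ev w = s"
proof (induction s arbitrary: X S)
  case Nil
  then obtain X' where "X = Some X'" "S > 0" by (auto simp: PP_def)
  then show ?case using cnil ev_Nil by blast
next
  case (Cons x s)
  have x: "okl A B x" "ntl A B x" "red s" "s \<noteq> [] \<longrightarrow> isl (hd s) \<noteq> isl x" using Cons.prems by (auto simp: red_Cons)
  obtain u e where u: "u \<in> SL (isl x) e" "ev u = [x]" "sgnb e = sgn' x" using SL_complete[OF x(1,2)] by blast
  let ?S = "S + jt X (isl x) + sgnb e"
  have P: "PP (Some (isl x)) ?S s"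
  proof (cases "s = []")
    case True then show ?thesis using Cons.prems u by (auto simp: PP_def)
  next
    case False
    have "ph (x # s) = sgn' x + jn x (hd s) + ph s" using False phi_Cons[of x s] by (simp add: JJ_def)
    moreover have "jn x (hd s) = jt (Some (isl x)) (isl (hd s))" using jt_jn[of x "hd s"] by simp
    ultimately show ?thesis using Cons.prems u x False by (auto simp: PP_def)
  qed
  obtain w where w: "Cont (Some (isl x)) ?S w" "ev w = s" using Cons.IH[OF x(3) P] by blast
  have ne: "Some (isl x) \<noteq> X" using Cons.prems by (auto simp: PP_def)
  have c: "Cont X S (u @ w)" by (rule ccons[OF ne u(1) w(1)])
  have wl: "w \<in> lists Xall" "u \<in> lists Xall" using Cont_lists[OF w(1)] SL_lists[OF u(1)] by auto
  have "ev (u @ w) = x # s" using ev_single[OF wl(2) wl(1) u(2)] fc_diff[OF x(2)] x(4) w(2) by auto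
  then show ?case using c by blast
qed

lemma ev_Cont: "ev ` {w. Cont None 0 w} = {g. red g \<and> ph g > 0}"
proof (intro equalityI subsetI)
  fix g assume "g \<in> ev ` {w. Cont None 0 w}"
  then obtain w where "Cont None 0 w" "g = ev w" by blast
  then have "red g" "PP None 0 g" using Cont_ev by auto
  then show "g \<in> {g. red g \<and> ph g > 0}" by (cases "g = []") (auto simp: PP_def)
next
  fix g assume "g \<in> {g. red g \<and> ph g > 0}"
  then have "red g" "ph g > 0" by auto
  then have "g \<noteq> []" by auto
  then have "PP None 0 g" using \<open>ph g > 0\<close> by (simp add: PP_def)
  then show "g \<in> ev ` {w. Cont None 0 w}" using Cont_complete[OF \<open>red g\<close>] by blast
qed

lemma ev_gen: "ev ` lists Xall = {g. red g}"
proof (intro equalityI subsetI)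
  fix g assume "g \<in> ev ` lists Xall" then show "g \<in> {g. red g}" using ev_red by auto
next
  fix g assume "g \<in> {g. red g}"
  then have "red g" by simp
  then show "g \<in> ev ` lists Xall"
  proof (induction g)
    case Nil
    have "([]::nat list) \<in> lists Xall" by simp
    then show ?case using ev_Nil by (metis image_eqI)
  next
    case (Cons x s)
    have x: "okl A B x" "ntl A B x" "red s" "s \<noteq> [] \<longrightarrow> isl (hd s) \<noteq> isl x" using Cons.prems by (auto simp: red_Cons)
    obtain w where w: "w \<in> lists Xall" "ev w = s" using Cons.IH[OF x(3)] by blast
    obtain u where u: "u \<in> lists Xall" "ev u = [x]"
    proof (cases x)
      case (Inl a)
      then have "a \<in> eval_word A fA ` lists (XS True)" using genA x by (simp add: okl_def)
      then obtain v where v: "v \<in> lists (XS True)" "a = eval_word A fA v" by (rule imageE)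
      have "ev (map (lcode True True) v) = [x]" using ev_posA[OF v(1)] v Inl x by (simp add: ntl_def)
      then show ?thesis using that lcode_lists[OF v(1)] by blast
    next
      case (Inr a)
      then have "a \<in> eval_word B fB ` lists (XS False)" using genB x by (simp add: okl_def)
      then obtain v where v: "v \<in> lists (XS False)" "a = eval_word B fB v" by (rule imageE)
      have "ev (map (lcode False True) v) = [x]" using ev_posB[OF v(1)] v Inr x by (simp add: ntl_def)
      then show ?thesis using that lcode_lists[OF v(1)] by blast
    qed
    have "ev (u @ w) = x # s" using ev_single[OF u(1) w(1) u(2)] fc_diff[OF x(2)] x(4) w(2) by auto
    moreover have "u @ w \<in> lists Xall" using u w by simp
    ultimately show ?case by (metis image_eqI)
  qed
qed

end


theorem corollary5p9:
  fixes A :: "'a monoid" and B :: "'b monoid"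
  assumes "group A" and "group B"
    and "\<exists>R. regular_left_order A R"
    and "\<exists>R. regular_left_order B R"
  shows "\<exists>R. one_counter_left_order (free_product A B) R"
proof -
  obtain RA XA fA LA where A1: "left_order A RA" "finite XA" "fA ` XA \<subseteq> carrier A"
    "eval_word A fA ` lists XA = carrier A" "LA \<subseteq> lists XA" "regular_lang XA LA"
    "eval_word A fA ` LA = positive_cone A RA"
    using assms(3) unfolding regular_left_order_def by (elim exE conjE) blast
  obtain QA qA FA dA where A2: "finite QA" "qA \<in> QA" "FA \<subseteq> QA" "\<forall>q\<in>QA. \<forall>x\<in>XA. dA q x \<in> QA"
    "LA = dfa_lang XA QA qA FA dA"
    using A1(6) unfolding regular_lang_def by (elim exE conjE) blast
  obtain RB XB fB LB where B1: "left_order B RB" "finite XB" "fB ` XB \<subseteq> carrier B"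
    "eval_word B fB ` lists XB = carrier B" "LB \<subseteq> lists XB" "regular_lang XB LB"
    "eval_word B fB ` LB = positive_cone B RB"
    using assms(4) unfolding regular_left_order_def by (elim exE conjE) blast
  obtain QB qB FB dB where B2: "finite QB" "qB \<in> QB" "FB \<subseteq> QB" "\<forall>q\<in>QB. \<forall>x\<in>XB. dB q x \<in> QB"
    "LB = dfa_lang XB QB qB FB dB"
    using B1(6) unfolding regular_lang_def by (elim exE conjE) blast
  define XS where "XS = (\<lambda>Y::bool. if Y then XA else XB)"
  define QS where "QS = (\<lambda>Y::bool. if Y then QA else QB)"
  define q0S where "q0S = (\<lambda>Y::bool. if Y then qA else qB)"
  define FS where "FS = (\<lambda>Y::bool. if Y then FA else FB)"
  define dS where "dS = (\<lambda>Y::bool. if Y then dA else dB)"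
  define PA where "PA = positive_cone A RA"
  define PB where "PB = positive_cone B RB"
  have cA: "cone A PA" unfolding PA_def by (rule left_order_cone[OF assms(1) A1(1)])
  have cB: "cone B PB" unfolding PB_def by (rule left_order_cone[OF assms(2) B1(1)])
  have d1: "\<And>Y. finite (XS Y)" using A1 B1 by (simp add: XS_def)
  have d2: "\<And>Y. finite (QS Y)" using A2 B2 by (simp add: QS_def)
  have d3: "\<And>Y. q0S Y \<in> QS Y" using A2 B2 by (simp add: QS_def q0S_def)
  have d4: "\<And>Y. FS Y \<subseteq> QS Y" using A2 B2 by (simp add: QS_def FS_def)
  have d5: "\<And>Y q x. q \<in> QS Y \<Longrightarrow> x \<in> XS Y \<Longrightarrow> dS Y q x \<in> QS Y"
    using A2 B2 by (case_tac Y) (simp_all add: QS_def XS_def dS_def)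
  have a1: "fA ` XS True \<subseteq> carrier A" "fB ` XS False \<subseteq> carrier B" using A1 B1 by (simp_all add: XS_def)
  have a2: "eval_word A fA ` lists (XS True) = carrier A" "eval_word B fB ` lists (XS False) = carrier B"
    using A1 B1 by (simp_all add: XS_def)
  have "{u \<in> lists (XS True). fold (\<lambda>x q. dS True q x) u (q0S True) \<in> FS True} = LA"
    using A2 by (simp add: XS_def dS_def q0S_def FS_def dfa_lang_def)
  then have a3: "eval_word A fA ` {u \<in> lists (XS True). fold (\<lambda>x q. dS True q x) u (q0S True) \<in> FS True} = PA"
    using A1 by (simp add: PA_def)
  have "{u \<in> lists (XS False). fold (\<lambda>x q. dS False q x) u (q0S False) \<in> FS False} = LB"
    using B2 by (simp add: XS_def dS_def q0S_def FS_def dfa_lang_def)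
  then have a4: "eval_word B fB ` {u \<in> lists (XS False). fold (\<lambda>x q. dS False q x) u (q0S False) \<in> FS False} = PB"
    using B1 by (simp add: PB_def)
  interpret I: fpall A B PA PB XS QS q0S FS dS fA fB
    apply (rule fpall.intro)
    subgoal by (rule fp2c.intro[OF fp2.intro[OF assms(1,2)]]) (simp add: fp2c_axioms_def cA cB)
    subgoal by (rule dfa2.intro[OF d1 d2 d3 d4 d5])
    subgoal unfolding fpall_axioms_def by (intro conjI) (rule a1 a2 a3 a4)+
    done
  have "one_counter_left_order (free_product A B) I.Rfp"
    unfolding one_counter_left_order_def
  proof (intro conjI exI)
    show "left_order (free_product A B) I.Rfp" by (rule I.Rfp_left_order)
    show "finite I.Xall" by (rule I.finite_Xall)
    show "I.ff ` I.Xall \<subseteq> carrier (free_product A B)" using I.ff_red by (auto simp: I.FP_simps)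
    show "eval_word (free_product A B) I.ff ` lists I.Xall = carrier (free_product A B)"
      using I.ev_gen by (simp add: I.FP_simps)
    show "{w. I.Cont None 0 w} \<subseteq> lists I.Xall" using I.Cont_lists by blast
    show "one_counter_lang I.Xall {w. I.Cont None 0 w}" by (rule I.one_counter_Cont)
    show "eval_word (free_product A B) I.ff ` {w. I.Cont None 0 w} = positive_cone (free_product A B) I.Rfp"
      using I.ev_Cont I.Rfp_cone by simp
  qed
  then show ?thesis by blast
qed


end
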